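(* Let $0<\nu<1$, $0\le\mu<1$ and $\lambda>0$. Then for every $t>0$, $$\int_\lambda^\infty e^{-(u-\lambda)}\,K_{\nu,\mu}(t,u)\,du=\lambda^{(\nu+\mu-2)/\nu}\int_0^t E_\nu\big(-(t-x)^{\nu}\big)\,f_{\nu,\nu+\mu-1}\!\left(\frac{x}{\lambda^{1/\nu}}\right)dx .$$
   Context: For $0<\nu<1$ and real $\rho$, $f_{\nu,\rho}(t)=\frac{1}{2\pi i}\int_{c-i\infty}^{c+i\infty}e^{st}s^{-\rho}e^{-s^{\nu}}\,ds$ ($t>0$, $c>0$, principal branches), the inverse Laplace transform of $s^{-\rho}e^{-s^\nu}$. For $\mu\ge0$, $u>0$, $K_{\nu,\mu}(t,u)$ is the inverse Laplace transform in $t$ of $s^{-\mu}e^{-us^\nu}$. $E_\nu(z)=\sum_{k\ge0}z^k/\Gamma(k\nu+1)$ is the Mittag-Leffler function. *)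

theory Defs
  imports "HOL-Analysis.Analysis"
begin

text \<open>Bromwich inversion integral along the vertical line Re s = c, parametrised
  by s = c + i y (so ds = i dy and 1/(2 pi i) ds = 1/(2 pi) dy).
  Principal branches: complex powr is exp (a * Ln z).\<close>
definition bromwich :: "real \<Rightarrow> (complex \<Rightarrow> complex) \<Rightarrow> real \<Rightarrow> complex" where
  "bromwich c F t = (1 / (2 * pi)) *
     integral UNIV (\<lambda>y::real. exp (Complex c y * of_real t) * F (Complex c y))"

definition f_fun :: "real \<Rightarrow> real \<Rightarrow> real \<Rightarrow> complex" where
  "f_fun \<nu> \<rho> t = bromwich 1 (\<lambda>s. s powr (- of_real \<rho>) * exp (- (s powr of_real \<nu>))) t"

definition K_fun :: "real \<Rightarrow> real \<Rightarrow> real \<Rightarrow> real \<Rightarrow> complex" where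
  "K_fun \<nu> \<mu> t u = bromwich 1 (\<lambda>s. s powr (- of_real \<mu>) * exp (- of_real u * (s powr of_real \<nu>))) t"

definition mittag_leffler :: "real \<Rightarrow> real \<Rightarrow> real" where
  "mittag_leffler \<nu> z = (\<Sum>k. z ^ k / Gamma (real k * \<nu> + 1))"

end

theory Submission
  imports Defs "HOL-Complex_Analysis.Complex_Analysis" "HOL-Real_Asymp.Real_Asymp"
begin

lemma Re_powr_ge:
  fixes s :: complex and nu :: real
  assumes "0 < Re s" "0 < nu" "nu \<le> 1"
  shows "cos (pi * nu / 2) * norm s powr nu \<le> Re (s powr of_real nu)"
proof -
  have s0: "s \<noteq> 0" using assms by auto
  have th: "\<bar>Im (Ln s)\<bar> < pi/2" using Re_Ln_pos_lt_imp assms by blast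
  have "s powr of_real nu = exp (of_real nu * Ln s)" using s0 by (simp add: powr_def)
  hence "Re (s powr of_real nu) = exp (nu * Re (Ln s)) * cos (nu * Im (Ln s))"
    by (simp add: Re_exp)
  also have "exp (nu * Re (Ln s)) = norm s powr nu" using s0 by (simp add: powr_def Re_Ln)
  finally have eq: "Re (s powr of_real nu) = norm s powr nu * cos (nu * Im (Ln s))" .
  have "cos (pi * nu / 2) \<le> cos \<bar>nu * Im (Ln s)\<bar>"
  proof (rule cos_monotone_0_pi_le)
    show "0 \<le> \<bar>nu * Im (Ln s)\<bar>" by simp
    have "\<bar>nu * Im (Ln s)\<bar> = nu * \<bar>Im (Ln s)\<bar>" using assms by (simp add: abs_mult)
    also have "\<dots> \<le> nu * (pi/2)" using th assms by (intro mult_left_mono) auto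
    finally show "\<bar>nu * Im (Ln s)\<bar> \<le> pi * nu / 2" by (simp add: mult.commute)
    show "pi * nu / 2 \<le> pi" using assms pi_gt_zero by (simp add: field_simps)
  qed
  hence "cos (pi * nu / 2) \<le> cos (nu * Im (Ln s))" by simp
  thus ?thesis unfolding eq by (simp add: mult.commute mult_left_mono)
qed

lemma norm_exp_powr_le:
  fixes s :: complex and nu b :: real
  assumes "0 < Re s" "0 < nu" "nu \<le> 1" "0 \<le> b"
  shows "norm (exp (- of_real b * s powr of_real nu)) \<le> exp (- (b * cos (pi * nu / 2)) * norm s powr nu)"
proof -
  have "norm (exp (- of_real b * s powr of_real nu)) = exp (- b * Re (s powr of_real nu))"
    by (simp add: norm_exp_eq_Re)
  also have "\<dots> \<le> exp (- (b * cos (pi * nu / 2)) * norm s powr nu)"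
    using Re_powr_ge[OF assms(1-3)] assms(4) by (simp add: mult_left_mono mult.assoc)
  finally show ?thesis .
qed

lemma bounded_at_top_cont:
  fixes f :: "real \<Rightarrow> real"
  assumes "continuous_on {a..} f" "(f \<longlongrightarrow> 0) at_top"
  shows "\<exists>A. \<forall>x\<ge>a. \<bar>f x\<bar> \<le> A"
proof -
  have "eventually (\<lambda>x. dist (f x) 0 < 1) at_top" using tendstoD[OF assms(2)] by simp
  then obtain N where N: "\<And>x. x \<ge> N \<Longrightarrow> \<bar>f x\<bar> < 1" by (auto simp: eventually_at_top_linorder)
  have "compact (f ` {a..max a N})"
    by (rule compact_continuous_image) (auto intro: continuous_on_subset[OF assms(1)])
  then obtain B where B: "\<And>y. y \<in> f ` {a..max a N} \<Longrightarrow> norm y \<le> B"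
    using compact_imp_bounded bounded_iff by metis
  show ?thesis
  proof (intro exI allI impI)
    fix x assume "x \<ge> a"
    show "\<bar>f x\<bar> \<le> max 1 B"
    proof (cases "x \<le> max a N")
      case True thus ?thesis using B[of "f x"] \<open>x \<ge> a\<close> by force
    next
      case False thus ?thesis using N[of x] by (auto simp: max_def split: if_splits)
    qed
  qed
qed

lemma set_int_lborel_nonneg:
  fixes f :: "real \<Rightarrow> real"
  assumes "f integrable_on A" "\<And>x. x \<in> A \<Longrightarrow> 0 \<le> f x" "A \<in> sets borel"
    "f \<in> borel_measurable borel"
  shows "set_integrable lborel A f"
proof -
  have "set_integrable lebesgue A f"
    using nonnegative_absolutely_integrable_1[OF assms(1,2)] by simp
  moreover have "(\<lambda>x. indicator A x *\<^sub>R f x) \<in> borel_measurable lborel"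
    using assms(3,4) by measurable
  ultimately show ?thesis unfolding set_integrable_def
    using integrable_completion by blast
qed

lemma integrable_tail2: "set_integrable lborel {1..} (\<lambda>y::real. y powr -2)"
proof (rule set_int_lborel_nonneg)
  show "(\<lambda>y::real. y powr -2) integrable_on {1..}"
    using has_integral_powr_to_inf[of "-2" 1] by auto
qed auto

definition dom2 :: "real \<Rightarrow> real" where
  "dom2 y = indicator {-1..1} y + indicator {1..} y * y powr -2 + indicator {1..} (-y) * (-y) powr -2"

lemma integrable_dom2: "integrable lborel dom2"
proof -
  have i1: "integrable lborel (\<lambda>y::real. indicator {-1..1} y :: real)"
    by (rule integrable_real_indicator) auto
  have i2: "integrable lborel (\<lambda>y::real. indicator {1..} y * y powr -2)"
    using integrable_tail2 by (simp add: set_integrable_def mult.commute)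
  have i3: "integrable lborel (\<lambda>y::real. indicator {1..} (-y) * (-y) powr -2)"
    using lborel_integrable_real_affine[OF i2, of "-1" 0] by simp
  show ?thesis unfolding dom2_def using i1 i2 i3 by (intro Bochner_Integration.integrable_add) auto
qed

lemma dom2_nonneg: "0 \<le> dom2 y"
  unfolding dom2_def by (auto simp: indicator_def)

lemma le_dom2:
  fixes h :: "real \<Rightarrow> real"
  assumes "\<And>y. \<bar>y\<bar> \<le> 1 \<Longrightarrow> \<bar>h y\<bar> \<le> D" "\<And>y. \<bar>y\<bar> \<ge> 1 \<Longrightarrow> \<bar>h y\<bar> * y\<^sup>2 \<le> D"
  shows "\<bar>h y\<bar> \<le> D * dom2 y"
proof (cases "\<bar>y\<bar> \<le> 1")
  case True
  have "dom2 y \<ge> 1" using True unfolding dom2_def by (auto simp: indicator_def)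
  moreover have "D \<ge> 0" using assms(1)[of 0] by simp
  ultimately show ?thesis using assms(1)[OF True] by (smt (verit) mult_left_mono mult_cancel_left1)
next
  case False
  hence y1: "\<bar>y\<bar> > 1" by simp
  have "dom2 y = \<bar>y\<bar> powr -2" using y1 unfolding dom2_def by (auto simp: indicator_def)
  also have "\<dots> = 1 / y\<^sup>2" using y1 by (simp add: powr_minus powr_numeral[symmetric] power2_abs divide_inverse)
  finally have "dom2 y = 1 / y\<^sup>2" .
  moreover have "y\<^sup>2 > 0" using y1 by simp
  ultimately have "\<bar>h y\<bar> = (\<bar>h y\<bar> * y\<^sup>2) * dom2 y" by (simp add: field_simps)
  also have "\<dots> \<le> D * dom2 y" using assms(2)[of y] y1 dom2_nonneg[of y] by (intro mult_right_mono) auto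
  finally show ?thesis .
qed

lemma integrable_exp_powr:
  fixes beta nu :: real
  assumes "0 < beta" "0 < nu"
  shows "integrable lborel (\<lambda>y::real. exp (- beta * \<bar>y\<bar> powr nu))"
proof -
  have "\<exists>A. \<forall>x\<ge>0. \<bar>x\<^sup>2 * exp (- beta * x powr nu)\<bar> \<le> A"
  proof (rule bounded_at_top_cont)
    show "continuous_on {0..} (\<lambda>x. x\<^sup>2 * exp (- beta * x powr nu))"
      using assms by (intro continuous_intros continuous_on_powr') auto
    show "((\<lambda>x. x\<^sup>2 * exp (- beta * x powr nu)) \<longlongrightarrow> 0) at_top"
      using assms by real_asymp
  qed
  then obtain A where A: "\<And>x. x \<ge> 0 \<Longrightarrow> x\<^sup>2 * exp (- beta * x powr nu) \<le> A" by force
  have bnd: "\<bar>exp (- beta * \<bar>y\<bar> powr nu)\<bar> \<le> max 1 A * dom2 y" for y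
  proof (rule le_dom2)
    fix y :: real assume "\<bar>y\<bar> \<le> 1"
    have "exp (- beta * \<bar>y\<bar> powr nu) \<le> 1" using assms by simp
    thus "\<bar>exp (- beta * \<bar>y\<bar> powr nu)\<bar> \<le> max 1 A" by (smt (verit) exp_gt_zero)
  next
    fix y :: real assume "\<bar>y\<bar> \<ge> 1"
    show "\<bar>exp (- beta * \<bar>y\<bar> powr nu)\<bar> * y\<^sup>2 \<le> max 1 A"
      using A[of "\<bar>y\<bar>"] by (simp add: mult.commute power2_abs)
  qed
  show ?thesis
  proof (rule Bochner_Integration.integrable_bound)
    show "integrable lborel (\<lambda>y. max 1 A * dom2 y)" using integrable_dom2 by simp
    show "AE y in lborel. norm (exp (- beta * \<bar>y\<bar> powr nu)) \<le> norm (max 1 A * dom2 y)"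
      using bnd dom2_nonneg by (auto intro!: AE_I2 simp: abs_mult)
  qed measurable
qed

definition good :: "real \<Rightarrow> (complex \<Rightarrow> complex) \<Rightarrow> bool" where
  "good nu F \<longleftrightarrow> F holomorphic_on {s. 0 < Re s} \<and>
     (\<exists>C p b. 0 < b \<and> (\<forall>s. 0 < Re s \<longrightarrow> norm (F s) \<le> C * norm s powr p * exp (- b * norm s powr nu)))"

lemma not_nonpos_Reals_if_Re_pos: "0 < Re s \<Longrightarrow> s \<notin> \<real>\<^sub>\<le>\<^sub>0"
  by (simp add: complex_nonpos_Reals_iff)

lemma holo_powr_const: "(\<lambda>s. s powr a) holomorphic_on {s. 0 < Re s}"
  by (rule holomorphic_on_powr) (auto intro: holomorphic_intros simp: not_nonpos_Reals_if_Re_pos)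

lemma cmod_Complex_ge_Re: "c \<le> cmod (Complex c y)"
  using complex_Re_le_cmod[of "Complex c y"] by simp

lemma cmod_Complex_ge_Im: "\<bar>y\<bar> \<le> cmod (Complex c y)"
  using abs_Im_le_cmod[of "Complex c y"] by simp

lemma continuous_Complex_line: "continuous_on UNIV (\<lambda>y. Complex c y)"
  unfolding Complex_eq by (intro continuous_intros)

lemma good_line_bound:
  assumes "good nu F" "0 < nu" "0 < c0"
  shows "\<exists>M beta. 0 < beta \<and> 0 \<le> M \<and> (\<forall>c\<ge>c0. \<forall>y. norm (F (Complex c y)) \<le> M * exp (- beta * \<bar>y\<bar> powr nu))"
proof -
  obtain C p b where b: "0 < b" and bnd: "\<And>s. 0 < Re s \<Longrightarrow> norm (F s) \<le> C * norm s powr p * exp (- b * norm s powr nu)"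
    using assms(1) unfolding good_def by blast
  have "\<exists>A. \<forall>r\<ge>c0. \<bar>r powr p * exp (- (b/2) * r powr nu)\<bar> \<le> A"
  proof (rule bounded_at_top_cont)
    show "continuous_on {c0..} (\<lambda>r. r powr p * exp (- (b/2) * r powr nu))"
      using assms by (intro continuous_intros) auto
    show "((\<lambda>r. r powr p * exp (- (b/2) * r powr nu)) \<longlongrightarrow> 0) at_top"
      using assms b by real_asymp
  qed
  then obtain A where A: "\<And>r. r \<ge> c0 \<Longrightarrow> r powr p * exp (- (b/2) * r powr nu) \<le> A" by force
  have A0: "0 \<le> A" using A[of c0] assms by (smt (verit) exp_gt_zero powr_ge_zero mult_nonneg_nonneg)
  show ?thesis
  proof (intro exI conjI allI impI)
    show "0 < b/2" using b by simp
    show "0 \<le> \<bar>C\<bar> * A" using A0 by simp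
    fix c y assume c: "c \<ge> c0"
    define s where "s = Complex c y"
    have Res: "0 < Re s" using c assms by (simp add: s_def)
    have ns: "norm s \<ge> c0" using cmod_Complex_ge_Re[of c y] c by (simp add: s_def)
    have ny: "\<bar>y\<bar> powr nu \<le> norm s powr nu"
      using cmod_Complex_ge_Im[of y c] assms by (intro powr_mono2) (auto simp: s_def)
    have "norm (F s) \<le> C * norm s powr p * exp (- b * norm s powr nu)" using bnd Res by blast
    also have "\<dots> \<le> \<bar>C\<bar> * (norm s powr p * exp (- (b/2) * norm s powr nu)) * exp (- (b/2) * norm s powr nu)"
    proof -
      have "exp (- b * norm s powr nu) = exp (- (b/2) * norm s powr nu) * exp (- (b/2) * norm s powr nu)"
        by (simp flip: exp_add)
      thus ?thesis by (simp add: mult.assoc mult_right_mono abs_ge_self)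
    qed
    also have "\<dots> \<le> \<bar>C\<bar> * A * exp (- (b/2) * \<bar>y\<bar> powr nu)"
    proof (intro mult_mono mult_left_mono)
      show "norm s powr p * exp (- (b/2) * norm s powr nu) \<le> A" using A ns by blast
      show "exp (- (b/2) * norm s powr nu) \<le> exp (- (b/2) * \<bar>y\<bar> powr nu)" using ny b by simp
    qed (use A0 in auto)
    finally show "norm (F (Complex c y)) \<le> \<bar>C\<bar> * A * exp (- (b/2) * \<bar>y\<bar> powr nu)" by (simp add: s_def)
  qed
qed

lemma good_cont: "good nu F \<Longrightarrow> continuous_on {s. 0 < Re s} F"
  unfolding good_def using holomorphic_on_imp_continuous_on by blast

lemma good_line_cont:
  assumes "good nu F" "0 < c"
  shows "continuous_on UNIV (\<lambda>y. F (Complex c y))"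
  by (rule continuous_on_compose2[OF good_cont[OF assms(1)] continuous_Complex_line]) (use assms in auto)

lemma bromwich_integrand_cont:
  assumes "good nu F" "0 < c"
  shows "continuous_on UNIV (\<lambda>y. exp (Complex c y * of_real x) * F (Complex c y))"
  using good_line_cont[OF assms] continuous_Complex_line by (intro continuous_intros) auto

lemma bromwich_integrable:
  assumes "good nu F" "0 < nu" "0 < c"
  shows "integrable lborel (\<lambda>y. exp (Complex c y * of_real x) * F (Complex c y))"
proof -
  obtain M beta where mb: "0 < beta" "0 \<le> M" "\<And>c' y. c' \<ge> c \<Longrightarrow> norm (F (Complex c' y)) \<le> M * exp (- beta * \<bar>y\<bar> powr nu)"
    using good_line_bound[OF assms(1,2,3)] by blast
  show ?thesis
  proof (rule Bochner_Integration.integrable_bound)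
    show "integrable lborel (\<lambda>y. exp (c * x) * M * exp (- beta * \<bar>y\<bar> powr nu))"
      using integrable_exp_powr[OF mb(1) assms(2)] by (simp add: mult.assoc)
    show "(\<lambda>y. exp (Complex c y * of_real x) * F (Complex c y)) \<in> borel_measurable lborel"
      using borel_measurable_continuous_onI[OF bromwich_integrand_cont[OF assms(1,3)]] by simp
    show "AE y in lborel. norm (exp (Complex c y * of_real x) * F (Complex c y)) \<le> norm (exp (c * x) * M * exp (- beta * \<bar>y\<bar> powr nu))"
    proof (intro AE_I2)
      fix y
      have "norm (exp (Complex c y * of_real x) * F (Complex c y)) = exp (c * x) * norm (F (Complex c y))"
        by (simp add: norm_mult norm_exp_eq_Re)
      also have "\<dots> \<le> exp (c * x) * (M * exp (- beta * \<bar>y\<bar> powr nu))" using mb(3)[of c y] by simp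
      finally show "norm (exp (Complex c y * of_real x) * F (Complex c y)) \<le> norm (exp (c * x) * M * exp (- beta * \<bar>y\<bar> powr nu))"
        using mb(2) by (simp add: mult.assoc)
    qed
  qed
qed

lemma bromwich_lint:
  assumes "good nu F" "0 < nu" "0 < c"
  shows "bromwich c F x = 1 / (2 * pi) * (LBINT y. exp (Complex c y * of_real x) * F (Complex c y))"
  unfolding bromwich_def using integral_lborel[OF bromwich_integrable[OF assms]] by simp

lemma integral_sym_tendsto:
  fixes f :: "real \<Rightarrow> complex"
  assumes "integrable lborel f"
  shows "((\<lambda>T. integral {-T..T} f) \<longlongrightarrow> integral UNIV f) at_top"
proof -
  have eq: "integral {-T..T} f = (LBINT y. indicator {-T..T} y *\<^sub>R f y)" for T
    using set_borel_integral_eq_integral(2)[of "{-T..T}" f] integrable_mult_indicator[OF _ assms, of "{-T..T}"]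
    by (simp add: set_integrable_def set_lebesgue_integral_def)
  have "((\<lambda>T. LBINT y. indicator {-T..T} y *\<^sub>R f y) \<longlongrightarrow> (LBINT y. f y)) at_top"
  proof (rule integral_dominated_convergence_at_top[where w = "\<lambda>y. norm (f y)"])
    show "f \<in> borel_measurable lborel" using assms by auto
    show "(\<lambda>y. indicator {-T..T} y *\<^sub>R f y) \<in> borel_measurable lborel" for T
      using assms by auto
    show "integrable lborel (\<lambda>y. norm (f y))" using assms by auto
    show "AE y in lborel. ((\<lambda>T. indicator {-T..T} y *\<^sub>R f y) \<longlongrightarrow> f y) at_top"
    proof (intro AE_I2)
      fix y :: real
      have "eventually (\<lambda>T. indicator {-T..T} y *\<^sub>R f y = f y) at_top"
        using eventually_ge_at_top[of "\<bar>y\<bar>"] by eventually_elim (auto simp: indicator_def)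
      thus "((\<lambda>T. indicator {-T..T} y *\<^sub>R f y) \<longlongrightarrow> f y) at_top"
        by (rule tendsto_eventually)
    qed
    show "\<forall>\<^sub>F T in at_top. AE y in lborel. norm (indicator {-T..T} y *\<^sub>R f y) \<le> norm (f y)"
      by (intro always_eventually allI AE_I2) (auto simp: indicator_def)
  qed
  thus ?thesis unfolding eq using integral_lborel[OF assms] by simp
qed

lemma closed_segment_horiz:
  fixes a b t :: real
  assumes "s \<in> closed_segment (Complex a t) (Complex b t)" "a \<le> b"
  shows "a \<le> Re s \<and> Re s \<le> b \<and> Im s = t"
proof -
  from assms obtain u where u: "0 \<le> u" "u \<le> 1" "s = (1 - u) *\<^sub>R Complex a t + u *\<^sub>R Complex b t"
    unfolding closed_segment_def by blast
  have re: "Re s = a + u * (b - a)" and im: "Im s = t" unfolding u(3) by (simp_all add: algebra_simps)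
  have "0 \<le> u * (b - a)" using u assms by simp
  moreover have "u * (b - a) \<le> 1 * (b - a)" using u assms by (intro mult_right_mono) auto
  ultimately show ?thesis using re im by simp
qed

lemma bromwich_shift:
  assumes gF: "good nu F" and nu: "0 < nu" and c1: "0 < c1" and c12: "c1 \<le> c2"
  shows "bromwich c1 F x = bromwich c2 F x"
proof -
  define S where "S = {s::complex. 0 < Re s}"
  define h where "h s = exp (s * of_real x) * F s" for s
  have holF: "F holomorphic_on S" using gF unfolding good_def S_def by blast
  have holh: "h holomorphic_on S" unfolding h_def using holF by (intro holomorphic_intros)
  have conth: "continuous_on S h" using holh holomorphic_on_imp_continuous_on by blast
  have convS: "convex S" unfolding S_def by (rule convex_halfspace_Re_gt)
  have c2: "0 < c2" using c1 c12 by simp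
  obtain M beta where mb: "0 < beta" "0 \<le> M" "\<And>c y. c \<ge> c1 \<Longrightarrow> norm (F (Complex c y)) \<le> M * exp (- beta * \<bar>y\<bar> powr nu)"
    using good_line_bound[OF gF nu c1] by blast
  define I where "I c = integral UNIV (\<lambda>y. h (Complex c y))" for c
  define J where "J c T = integral {-T..T} (\<lambda>y. h (Complex c y))" for c T
  have intc: "integrable lborel (\<lambda>y. h (Complex c y))" if "0 < c" for c
    using bromwich_integrable[OF gF nu that] unfolding h_def by simp
  have lim1: "((\<lambda>T. J c T) \<longlongrightarrow> I c) at_top" if "0 < c" for c
    unfolding J_def I_def by (rule integral_sym_tendsto[OF intc[OF that]])
  define K where "K = 2 * (c2 - c1) * exp (c2 * \<bar>x\<bar>) * M"
  have key: "norm (J c2 T - J c1 T) \<le> K * exp (- beta * T powr nu)" if T: "0 < T" for T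
  proof -
    define A where "A = Complex c1 (-T)"
    define B where "B = Complex c2 (-T)"
    define C where "C = Complex c2 T"
    define D where "D = Complex c1 T"
    have inS: "A \<in> S" "B \<in> S" "C \<in> S" "D \<in> S" using c1 c2 by (auto simp: S_def A_def B_def C_def D_def)
    have seg: "closed_segment p q \<subseteq> S" if "p \<in> S" "q \<in> S" for p q
      using closed_segment_subset[OF that convS] .
    have hc: "(h has_contour_integral contour_integral (linepath p q) h) (linepath p q)" if "p \<in> S" "q \<in> S" for p q
      by (rule has_contour_integral_integral, rule contour_integrable_continuous_linepath,
          rule continuous_on_subset[OF conth seg[OF that]])
    define iAB where "iAB = contour_integral (linepath A B) h"
    define iBC where "iBC = contour_integral (linepath B C) h"
    define iCD where "iCD = contour_integral (linepath C D) h"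
    define iAD where "iAD = contour_integral (linepath A D) h"
    have hAB: "(h has_contour_integral iAB) (linepath A B)" using hc inS iAB_def by blast
    have hBC: "(h has_contour_integral iBC) (linepath B C)" using hc inS iBC_def by blast
    have hCD: "(h has_contour_integral iCD) (linepath C D)" using hc inS iCD_def by blast
    have hAD: "(h has_contour_integral iAD) (linepath A D)" using hc inS iAD_def by blast
    have hDA: "(h has_contour_integral - iAD) (linepath D A)"
      using has_contour_integral_reversepath[OF _ hAD] by simp
    define g where "g = linepath A B +++ (linepath B C +++ (linepath C D +++ linepath D A))"
    have j1: "(h has_contour_integral (iCD + - iAD)) (linepath C D +++ linepath D A)"
      by (rule has_contour_integral_join[OF hCD hDA]) auto
    have j2: "(h has_contour_integral (iBC + (iCD + - iAD))) (linepath B C +++ (linepath C D +++ linepath D A))"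
      by (rule has_contour_integral_join[OF hBC j1]) auto
    have "(h has_contour_integral (iAB + (iBC + (iCD + - iAD)))) g"
      unfolding g_def by (rule has_contour_integral_join[OF hAB j2]) auto
    moreover have "(h has_contour_integral 0) g"
    proof (rule Cauchy_theorem_convex_simple[OF holh convS])
      show "valid_path g" unfolding g_def by (intro valid_path_join) auto
      have "path_image g = closed_segment A B \<union> (closed_segment B C \<union> (closed_segment C D \<union> closed_segment D A))"
        unfolding g_def by (simp add: path_image_join)
      thus "path_image g \<subseteq> S" using seg[of A B] seg[of B C] seg[of C D] seg[of D A] inS by auto
      show "pathfinish g = pathstart g" unfolding g_def by simp
    qed
    ultimately have sum0: "iAB + (iBC + (iCD + - iAD)) = 0" using has_contour_integral_unique by blast
    have J2: "J c2 T = - \<i> * iBC"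
    proof -
      have "((\<lambda>y. h (Complex c2 y)) has_integral - \<i> * iBC) {-T..T}"
        using has_contour_integral_linepath_same_Re_iff[of B c2 C "-T" T h iBC] hBC T
        by (simp add: B_def C_def)
      thus ?thesis unfolding J_def by blast
    qed
    have J1: "J c1 T = - \<i> * iAD"
    proof -
      have "((\<lambda>y. h (Complex c1 y)) has_integral - \<i> * iAD) {-T..T}"
        using has_contour_integral_linepath_same_Re_iff[of A c1 D "-T" T h iAD] hAD T
        by (simp add: A_def D_def)
      thus ?thesis unfolding J_def by blast
    qed
    have e1: "iBC - iAD = - (iAB + iCD)" using sum0 by algebra
    have diff: "J c2 T - J c1 T = \<i> * (iAB + iCD)"
    proof -
      have "J c2 T - J c1 T = - \<i> * (iBC - iAD)" unfolding J1 J2 by (simp add: algebra_simps)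
      also have "\<dots> = \<i> * (iAB + iCD)" unfolding e1 by (simp add: algebra_simps)
      finally show ?thesis .
    qed
    define Bd where "Bd = exp (c2 * \<bar>x\<bar>) * M * exp (- beta * T powr nu)"
    have hb: "norm (h s) \<le> Bd" if "c1 \<le> Re s" "Re s \<le> c2" "\<bar>Im s\<bar> = T" for s
    proof -
      have s: "s = Complex (Re s) (Im s)" by simp
      have "norm (h s) = exp (Re s * x) * norm (F s)" unfolding h_def by (simp add: norm_mult norm_exp_eq_Re)
      also have "exp (Re s * x) \<le> exp (c2 * \<bar>x\<bar>)"
      proof -
        have "Re s * x \<le> \<bar>Re s\<bar> * \<bar>x\<bar>" by (metis abs_ge_self abs_mult)
        also have "\<dots> \<le> c2 * \<bar>x\<bar>" using that c1 by (intro mult_right_mono) auto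
        finally show ?thesis by simp
      qed
      hence "exp (Re s * x) * norm (F s) \<le> exp (c2 * \<bar>x\<bar>) * norm (F s)" by (simp add: mult_right_mono)
      also have "norm (F s) \<le> M * exp (- beta * T powr nu)"
        using mb(3)[of "Re s" "Im s"] that by simp
      finally show ?thesis unfolding Bd_def by (simp add: mult.assoc mult_left_mono)
    qed
    have Bd0: "0 \<le> Bd" unfolding Bd_def using mb by simp
    have nAB: "norm iAB \<le> Bd * norm (B - A)"
    proof (rule has_contour_integral_bound_linepath[OF hAB Bd0])
      fix s assume "s \<in> closed_segment A B"
      thus "norm (h s) \<le> Bd" using closed_segment_horiz[of s c1 "-T" c2] c12 T
        by (intro hb) (auto simp: A_def B_def)
    qed
    have nCD: "norm iCD \<le> Bd * norm (D - C)"
    proof (rule has_contour_integral_bound_linepath[OF hCD Bd0])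
      fix s assume "s \<in> closed_segment C D"
      hence "s \<in> closed_segment D C" by (simp add: closed_segment_commute)
      thus "norm (h s) \<le> Bd" using closed_segment_horiz[of s c1 T c2] c12 T
        by (intro hb) (auto simp: C_def D_def)
    qed
    have nBA: "norm (B - A) = c2 - c1" using c12 by (simp add: A_def B_def Complex_eq flip: of_real_diff)
    have nDC: "norm (D - C) = c2 - c1" using c12 by (simp add: C_def D_def Complex_eq flip: of_real_diff)
    have "norm (J c2 T - J c1 T) \<le> norm iAB + norm iCD" unfolding diff
      by (simp add: norm_mult norm_triangle_ineq)
    also have "\<dots> \<le> 2 * (c2 - c1) * Bd" using nAB nCD nBA nDC by (simp add: algebra_simps)
    finally show ?thesis unfolding K_def Bd_def by (simp add: mult.assoc)
  qed
  have "((\<lambda>T. J c2 T - J c1 T) \<longlongrightarrow> 0) at_top"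
  proof (rule Lim_null_comparison)
    show "\<forall>\<^sub>F T in at_top. norm (J c2 T - J c1 T) \<le> K * exp (- beta * T powr nu)"
      using eventually_gt_at_top[of 0] by eventually_elim (rule key)
    show "((\<lambda>T. K * exp (- beta * T powr nu)) \<longlongrightarrow> 0) at_top"
      using mb nu by real_asymp
  qed
  moreover have "((\<lambda>T. J c2 T - J c1 T) \<longlongrightarrow> I c2 - I c1) at_top"
    by (intro tendsto_diff lim1 c1 c2)
  ultimately have "I c2 - I c1 = 0" using tendsto_unique[OF trivial_limit_at_top_linorder] by metis
  thus ?thesis unfolding bromwich_def I_def h_def by simp
qed

lemma bromwich_norm_bound:
  assumes gF: "good nu F" and nu: "0 < nu" and c0: "0 < c0"
  shows "\<exists>K. \<forall>c\<ge>c0. norm (bromwich c F x) \<le> K * exp (c * x)"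
proof -
  obtain M beta where mb: "0 < beta" "0 \<le> M" "\<And>c y. c \<ge> c0 \<Longrightarrow> norm (F (Complex c y)) \<le> M * exp (- beta * \<bar>y\<bar> powr nu)"
    using good_line_bound[OF gF nu c0] by blast
  define L where "L = (LBINT y. exp (- beta * \<bar>y\<bar> powr nu))"
  have intL: "integrable lborel (\<lambda>y. exp (- beta * \<bar>y\<bar> powr nu))" by (rule integrable_exp_powr[OF mb(1) nu])
  show ?thesis
  proof (intro exI allI impI)
    fix c assume c: "c \<ge> c0"
    hence cpos: "0 < c" using c0 by simp
    have "norm (LBINT y. exp (Complex c y * of_real x) * F (Complex c y)) \<le> (LBINT y. exp (c * x) * (M * exp (- beta * \<bar>y\<bar> powr nu)))"
    proof (rule Bochner_Integration.integral_norm_bound_integral)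
      show "integrable lborel (\<lambda>y. exp (Complex c y * of_real x) * F (Complex c y))"
        by (rule bromwich_integrable[OF gF nu cpos])
      show "integrable lborel (\<lambda>y. exp (c * x) * (M * exp (- beta * \<bar>y\<bar> powr nu)))"
        using intL by simp
      fix y
      have "norm (exp (Complex c y * of_real x) * F (Complex c y)) = exp (c * x) * norm (F (Complex c y))"
        by (simp add: norm_mult norm_exp_eq_Re)
      also have "\<dots> \<le> exp (c * x) * (M * exp (- beta * \<bar>y\<bar> powr nu))" using mb(3)[OF c, of y] by simp
      finally show "norm (exp (Complex c y * of_real x) * F (Complex c y)) \<le> exp (c * x) * (M * exp (- beta * \<bar>y\<bar> powr nu))" .
    qed
    also have "\<dots> = exp (c * x) * (M * L)" unfolding L_def by simp
    finally have "norm (LBINT y. exp (Complex c y * of_real x) * F (Complex c y)) \<le> exp (c * x) * (M * L)" .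
    thus "norm (bromwich c F x) \<le> (M * L / (2 * pi)) * exp (c * x)"
      unfolding bromwich_lint[OF gF nu cpos] by (simp add: norm_mult norm_divide field_simps)
  qed
qed

lemma bromwich_causal:
  assumes gF: "good nu F" and nu: "0 < nu" and c: "0 < c" and x: "x < 0"
  shows "bromwich c F x = 0"
proof -
  obtain K where K: "\<And>c'. c' \<ge> c \<Longrightarrow> norm (bromwich c' F x) \<le> K * exp (c' * x)"
    using bromwich_norm_bound[OF gF nu c, of x] by blast
  have ev: "eventually (\<lambda>c'. norm (bromwich c F x) \<le> K * exp (c' * x)) at_top"
    using eventually_ge_at_top[of c]
  proof eventually_elim
    case (elim c')
    thus ?case using K[OF elim] bromwich_shift[OF gF nu c elim] by simp
  qed
  have "((\<lambda>c'. K * exp (c' * x)) \<longlongrightarrow> 0) at_top" using x by real_asymp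
  hence "norm (bromwich c F x) \<le> 0"
    using tendsto_le[OF trivial_limit_at_top_linorder _ tendsto_const ev] by blast
  thus ?thesis by simp
qed

lemma gamma_scaled:
  fixes a s0 :: real
  assumes a: "0 < a" and s0: "0 < s0"
  shows "integrable lborel (\<lambda>w. indicator {0..} w * (w powr (a - 1) * exp (- (s0 * w))))"
    and "(LBINT w. indicator {0..} w * (w powr (a - 1) * exp (- (s0 * w)))) = Gamma a / s0 powr a"
proof -
  define g where "g w = indicator {0..} w * (w powr (a - 1) / exp w)" for w :: real
  have si: "set_integrable lborel {0..} (\<lambda>w. w powr (a - 1) / exp w)"
    using Gamma_integral_real[OF a] by (intro set_int_lborel_nonneg) (auto)
  have ig: "integrable lborel g" using si unfolding set_integrable_def g_def by (simp add: mult.commute)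
  have Ig: "(LBINT w. g w) = Gamma a"
    using set_borel_integral_eq_integral(2)[OF si] integral_unique[OF Gamma_integral_real[OF a]]
    unfolding set_lebesgue_integral_def g_def by (simp add: mult.commute)
  have eqh: "g (0 + s0 * w) = s0 powr (a - 1) * (indicator {0..} w * (w powr (a - 1) * exp (- (s0 * w))))" for w
  proof (cases "w \<ge> 0")
    case True thus ?thesis using s0 by (simp add: g_def powr_mult exp_minus field_simps)
  next
    case False
    hence "\<not> s0 * w \<ge> 0" using s0 by (simp add: zero_le_mult_iff)
    thus ?thesis using False by (simp add: g_def indicator_def)
  qed
  have ih: "integrable lborel (\<lambda>w. g (0 + s0 * w))" using lborel_integrable_real_affine[OF ig, of s0 0] s0 by simp
  have sp: "s0 powr (a - 1) > 0" using s0 by simp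
  show int: "integrable lborel (\<lambda>w. indicator {0..} w * (w powr (a - 1) * exp (- (s0 * w))))"
  proof -
    have "integrable lborel (\<lambda>w. g (0 + s0 * w) / s0 powr (a - 1))" using ih by simp
    thus ?thesis unfolding eqh using sp by simp
  qed
  have "Gamma a = s0 * (LBINT w. g (0 + s0 * w))"
    using lborel_integral_real_affine[of s0 g 0] s0 Ig by simp
  also have "(LBINT w. g (0 + s0 * w)) = s0 powr (a - 1) * (LBINT w. indicator {0..} w * (w powr (a - 1) * exp (- (s0 * w))))"
    unfolding eqh by simp
  finally have "Gamma a = s0 * s0 powr (a - 1) * (LBINT w. indicator {0..} w * (w powr (a - 1) * exp (- (s0 * w))))"
    by simp
  moreover have "s0 * s0 powr (a - 1) = s0 powr a" using s0 by (simp add: powr_diff)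
  ultimately show "(LBINT w. indicator {0..} w * (w powr (a - 1) * exp (- (s0 * w)))) = Gamma a / s0 powr a"
    using s0 by (simp add: field_simps)
qed

lemma Gamma_shift_poch:
  fixes b :: real assumes "0 < b"
  shows "Gamma (b + real n) = Gamma b * pochhammer b n"
proof -
  have "b \<notin> \<int>\<^sub>\<le>\<^sub>0" using assms by (auto dest: nonpos_Ints_nonpos)
  hence "pochhammer b n = Gamma (b + of_nat n) / Gamma b" by (rule pochhammer_Gamma)
  moreover have "Gamma b \<noteq> 0" using Gamma_real_pos[OF assms] by simp
  ultimately show ?thesis by simp
qed

lemma powr_times_of_real:
  fixes s0 :: real and w a :: complex
  assumes "0 < s0" "w \<noteq> 0"
  shows "(of_real s0 * w) powr a = of_real s0 powr a * w powr a"
proof -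
  have "of_real s0 * w \<noteq> 0" using assms by simp
  thus ?thesis using assms by (simp add: powr_def Ln_times_of_real distrib_left exp_add)
qed

lemma laplace_powr:
  fixes beta :: real and s :: complex
  assumes beta: "0 \<le> beta" and s: "0 < Re s"
  shows "integrable lborel (\<lambda>w. indicator {0..} w *\<^sub>R (of_real (w powr beta) * exp (- s * of_real w)))"
    and "(LBINT w. indicator {0..} w *\<^sub>R (of_real (w powr beta) * exp (- s * of_real w))) =
           of_real (Gamma (beta + 1)) * s powr (- of_real (beta + 1))"
proof -
  define phi where "phi w = indicator {0..} w *\<^sub>R (of_real (w powr beta) * exp (- s * of_real w))" for w
  have sn: "s \<noteq> 0" using s by auto
  define s0 where "s0 = (cmod s)^2 / Re s"
  have s0pos: "0 < s0" using s sn by (simp add: s0_def)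
  have s0Re: "s0 * Re s = (cmod s)^2" using s by (simp add: s0_def)
  define z where "z = s - of_real s0"
  define r where "r = cmod z"
  have r0: "0 \<le> r" unfolding r_def by simp
  have r_lt: "r < s0"
  proof -
    have "r^2 = (Re s - s0)^2 + (Im s)^2" unfolding r_def z_def by (simp add: cmod_power2)
    also have "\<dots> = ((Re s)^2 + (Im s)^2) - 2 * (s0 * Re s) + s0^2" by (simp add: power2_diff algebra_simps)
    also have "\<dots> = s0^2 - (cmod s)^2" using s0Re cmod_power2[of s] by linarith
    also have "\<dots> < s0^2" using sn by simp
    finally have "r^2 < s0^2" .
    thus ?thesis using power2_less_imp_less[of r s0] s0pos by simp
  qed
  define A where "A n = Gamma (beta + real n + 1) / s0 powr (beta + real n + 1)" for n :: nat
  define g where "g n w = indicator {0..} w * (w powr (beta + real n) * exp (- (s0 * w)))" for n :: nat and w :: real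
  define f where "f n w = of_real (g n w) * ((- z) ^ n / fact n)" for n :: nat and w :: real
  have gi: "integrable lborel (g n)" and gI: "(LBINT w. g n w) = A n" for n
    using gamma_scaled[of "beta + real n + 1" s0] beta s0pos unfolding g_def A_def by auto
  have g0: "0 \<le> g n w" for n w unfolding g_def by (auto simp: indicator_def)
  have fi: "integrable lborel (f n)" for n
    unfolding f_def using gi[of n] by (intro integrable_mult_left) auto
  have fI: "(LBINT w. f n w) = of_real (A n) * ((- z) ^ n / fact n)" for n
    unfolding f_def using gI[of n] by (simp add: integral_mult_left_zero)
  have nf: "norm (f n w) = g n w * r ^ n / fact n" for n w
    unfolding f_def r_def using g0[of n w] by (simp add: norm_mult norm_divide norm_power)
  have nfI: "(LBINT w. norm (f n w)) = A n * r ^ n / fact n" for n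
    unfolding nf using gI[of n] by simp
  have fsum: "(\<lambda>n. f n w) sums phi w" for w
  proof (cases "w > 0")
    case True
    have "(\<lambda>n. (- z * of_real w) ^ n /\<^sub>R fact n) sums exp (- z * of_real w)" by (rule exp_converges)
    hence "(\<lambda>n. of_real (w powr beta * exp (- (s0 * w))) * ((- z * of_real w) ^ n /\<^sub>R fact n)) sums
             (of_real (w powr beta * exp (- (s0 * w))) * exp (- z * of_real w))"
      by (rule sums_mult)
    moreover have "of_real (w powr beta * exp (- (s0 * w))) * ((- z * of_real w) ^ n /\<^sub>R fact n) = f n w" for n
    proof -
      have "w powr (beta + real n) = w powr beta * w ^ n" using True by (simp add: powr_add powr_realpow)
      moreover have "(- z * of_real w) ^ n = (- z) ^ n * of_real w ^ n" by (rule power_mult_distrib)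
      ultimately show ?thesis using True unfolding f_def g_def
        by (simp add: scaleR_conv_of_real field_simps del: mult_minus_left)
    qed
    moreover have "of_real (w powr beta * exp (- (s0 * w))) * exp (- z * of_real w) = phi w"
    proof -
      have "exp (- (of_real s0 * of_real w)) * exp (- z * of_real w) = exp (- s * of_real w)"
        unfolding z_def by (simp add: exp_add[symmetric] algebra_simps)
      thus ?thesis using True unfolding phi_def
        by (simp add: exp_of_real[symmetric] mult.assoc)
    qed
    ultimately show ?thesis by simp
  next
    case False
    hence "f n w = 0" for n
      unfolding f_def g_def by (cases "w = 0") (auto simp: indicator_def)
    moreover have "phi w = 0" using False unfolding phi_def by (cases "w = 0") (auto simp: indicator_def)
    ultimately show ?thesis by simp
  qed
  have nsum: "summable (\<lambda>n. norm (f n w))" for w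
  proof -
    have "summable (\<lambda>n. g 0 w * (r * w) ^ n / fact n)" if "w > 0"
      using summable_mult[OF summable_exp[of "r * w"], of "g 0 w"]
      by (simp add: divide_inverse mult_ac)
    moreover have "g n w * r ^ n / fact n = g 0 w * (r * w) ^ n / fact n" if "w > 0" for n
      using that unfolding g_def by (simp add: powr_add powr_realpow power_mult_distrib)
    moreover have "g n w = 0" if "\<not> w > 0" for n
      using that unfolding g_def by (cases "w = 0") (auto simp: indicator_def)
    ultimately show ?thesis unfolding nf by (cases "w > 0") auto
  qed
  have Aeq: "A n = Gamma (beta + 1) / s0 powr (beta + 1) * (pochhammer (beta + 1) n / s0 ^ n)" for n
  proof -
    have "Gamma (beta + real n + 1) = Gamma (beta + 1) * pochhammer (beta + 1) n"
      using Gamma_shift_poch[of "beta + 1" n] beta by (simp add: add_ac)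
    moreover have "s0 powr (beta + real n + 1) = s0 powr (beta + 1) * s0 ^ n"
    proof -
      have "beta + real n + 1 = (beta + 1) + real n" by simp
      hence "s0 powr (beta + real n + 1) = s0 powr (beta + 1) * s0 powr (real n)" by (simp only: powr_add)
      thus ?thesis using s0pos by (simp only: powr_realpow)
    qed
    ultimately show ?thesis unfolding A_def by simp
  qed
  have Isum: "summable (\<lambda>n. LBINT w. norm (f n w))"
  proof -
    have "\<bar>- (r / s0)\<bar> < 1" using r0 r_lt s0pos by simp
    from gen_binomial_real[OF this, of "- (beta + 1)"]
    have "summable (\<lambda>n. ((- (beta + 1)) gchoose n) * (- (r / s0)) ^ n)" by (rule sums_summable)
    hence "summable (\<lambda>n. Gamma (beta + 1) / s0 powr (beta + 1) * (((- (beta + 1)) gchoose n) * (- (r / s0)) ^ n))"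
      by (rule summable_mult)
    moreover have "Gamma (beta + 1) / s0 powr (beta + 1) * (((- (beta + 1)) gchoose n) * (- (r / s0)) ^ n)
                     = (LBINT w. norm (f n w))" for n
    proof -
      have e1: "(- (beta + 1)) gchoose n = (-1)^n * pochhammer (beta + 1) n / fact n"
        by (simp add: gbinomial_pochhammer add.commute)
      have e2: "(- (r / s0)) ^ n = (-1)^n * (r / s0) ^ n" by (rule power_minus)
      have e3: "(-1::real)^n * (-1)^n = 1" by (induct n) auto
      have "((- (beta + 1)) gchoose n) * (- (r / s0)) ^ n = ((-1)^n * (-1)^n) * (pochhammer (beta + 1) n / fact n * (r / s0) ^ n)"
        unfolding e1 e2 by (simp add: mult_ac)
      hence e4: "((- (beta + 1)) gchoose n) * (- (r / s0)) ^ n = pochhammer (beta + 1) n / fact n * (r / s0) ^ n"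
        unfolding e3 by simp
      show ?thesis unfolding nfI Aeq e4 using s0pos by (simp add: power_divide field_simps)
    qed
    ultimately show ?thesis by (simp only:)
  qed
  have AEs: "AE w in lborel. summable (\<lambda>n. norm (f n w))" using nsum by simp
  have phi_eq: "(\<lambda>w. \<Sum>n. f n w) = phi" using sums_unique[OF fsum] by (intro ext) simp
  show "integrable lborel (\<lambda>w. indicator {0..} w *\<^sub>R (of_real (w powr beta) * exp (- s * of_real w)))"
    using integrable_suminf[OF fi AEs Isum] unfolding phi_eq phi_def .
  have "(LBINT w. phi w) = (\<Sum>n. LBINT w. f n w)"
    using integral_suminf[OF fi AEs Isum] unfolding phi_eq .
  also have "\<dots> = of_real (Gamma (beta + 1)) * s powr (- of_real (beta + 1))"
  proof -
    define a :: complex where "a = - of_real (beta + 1)"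
    define C :: complex where "C = of_real (Gamma (beta + 1) / s0 powr (beta + 1))"
    have zl: "cmod (z / of_real s0) < 1" using r_lt s0pos by (simp add: r_def norm_divide)
    have "(\<lambda>n. C * ((a gchoose n) * (z / of_real s0) ^ n)) sums (C * (1 + z / of_real s0) powr a)"
      by (rule sums_mult[OF gen_binomial_complex[OF zl]])
    moreover have "C * ((a gchoose n) * (z / of_real s0) ^ n) = (LBINT w. f n w)" for n
    proof -
      have "a gchoose n = (- 1) ^ n * of_real (pochhammer (beta + 1) n) / fact n"
        unfolding a_def by (simp add: gbinomial_pochhammer pochhammer_of_real[symmetric] add.commute)
      thus ?thesis unfolding fI Aeq C_def using s0pos
        by (simp add: power_divide power_minus' field_simps)
    qed
    moreover have "C * (1 + z / of_real s0) powr a = of_real (Gamma (beta + 1)) * s powr (- of_real (beta + 1))"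
    proof -
      have w: "1 + z / of_real s0 = s / of_real s0" using s0pos unfolding z_def by (simp add: field_simps)
      have sw: "s = of_real s0 * (s / of_real s0)" using s0pos by simp
      have "s powr a = of_real s0 powr a * (s / of_real s0) powr a"
        by (subst sw, rule powr_times_of_real) (use s0pos sn in auto)
      moreover have "of_real s0 powr a = of_real (1 / s0 powr (beta + 1))"
      proof -
        have "of_real s0 powr a = of_real s0 powr (of_real (- (beta + 1)))" unfolding a_def by simp
        also have "\<dots> = of_real (s0 powr (- (beta + 1)))" using s0pos by (intro powr_of_real) simp
        also have "\<dots> = of_real (1 / s0 powr (beta + 1))" by (simp only: powr_minus_divide)
        finally show ?thesis .
      qed
      ultimately show ?thesis unfolding w C_def a_def by (simp add: field_simps)
    qed
    ultimately show ?thesis using sums_unique by (metis (no_types, lifting) sums_cong)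
  qed
  finally show "(LBINT w. indicator {0..} w *\<^sub>R (of_real (w powr beta) * exp (- s * of_real w))) =
           of_real (Gamma (beta + 1)) * s powr (- of_real (beta + 1))" unfolding phi_def .
qed

lemma good_mult_powr:
  assumes "good nu G"
  shows "good nu (\<lambda>s. s powr (- of_real q) * G s)"
proof -
  obtain C p b where b: "0 < b" and bnd: "\<And>s. 0 < Re s \<Longrightarrow> norm (G s) \<le> C * norm s powr p * exp (- b * norm s powr nu)"
    and hol: "G holomorphic_on {s. 0 < Re s}"
    using assms unfolding good_def by blast
  have "(\<lambda>s. s powr (- of_real q) * G s) holomorphic_on {s. 0 < Re s}"
    using holo_powr_const hol by (intro holomorphic_on_mult) auto
  moreover have "norm (s powr (- of_real q) * G s) \<le> C * norm s powr (p - q) * exp (- b * norm s powr nu)"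
    if s: "0 < Re s" for s
  proof -
    have sn: "norm s > 0" using s by auto
    have "norm (s powr (- of_real q) * G s) = norm s powr (- q) * norm (G s)"
      by (simp add: norm_mult norm_powr_real_powr')
    also have "\<dots> \<le> norm s powr (- q) * (C * norm s powr p * exp (- b * norm s powr nu))"
      using bnd[OF s] by (intro mult_left_mono) auto
    also have "\<dots> = C * (norm s powr (- q) * norm s powr p) * exp (- b * norm s powr nu)" by (simp add: mult_ac)
    also have "norm s powr (- q) * norm s powr p = norm s powr (p - q)" using sn by (simp add: powr_add[symmetric])
    finally show ?thesis .
  qed
  ultimately show ?thesis unfolding good_def using b by blast
qed

lemma RL_bromwich:
  assumes gG: "good nu G" and nu: "0 < nu" and c: "0 < c" and beta: "0 \<le> beta"
  shows "integrable lborel (\<lambda>x. indicator {0..t} x *\<^sub>R (of_real ((t - x) powr beta) * bromwich c G x))"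
    and "(LBINT x. indicator {0..t} x *\<^sub>R (of_real ((t - x) powr beta) * bromwich c G x)) =
           of_real (Gamma (beta + 1)) * bromwich c (\<lambda>s. s powr (- of_real (beta + 1)) * G s) t"
proof -
  define g where "g x = bromwich c G x" for x
  define P where "P x = indicator {0..t} x *\<^sub>R (of_real ((t - x) powr beta) * g x)" for x
  define Q where "Q x = indicator {..t} x *\<^sub>R (of_real ((t - x) powr beta) * g x)" for x
  define R where "R w = indicator {0..} w *\<^sub>R (of_real (w powr beta) * g (t - w))" for w
  have PQ: "P = Q"
  proof
    fix x show "P x = Q x"
    proof (cases "x < 0")
      case True thus ?thesis unfolding P_def Q_def g_def using bromwich_causal[OF gG nu c True] by simp
    next
      case False thus ?thesis unfolding P_def Q_def by (auto simp: indicator_def)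
    qed
  qed
  have QR: "Q (t + (-1) * w) = R w" for w unfolding Q_def R_def by (auto simp: indicator_def)
  define k where "k = (\<lambda>(w::real, y::real). indicator {0..} w *\<^sub>R (of_real (w powr beta) *
                          (exp (Complex c y * of_real (t - w)) * G (Complex c y))))"
  have intG: "integrable lborel (\<lambda>y. G (Complex c y))"
    using bromwich_integrable[OF gG nu c, of 0] by simp
  define NG where "NG = (LBINT y. norm (G (Complex c y)))"
  have mG: "(\<lambda>y. G (Complex c y)) \<in> borel_measurable lborel" using intG by auto
  have mk: "k \<in> borel_measurable (lborel \<Otimes>\<^sub>M lborel)"
  proof -
    have m3: "(\<lambda>p::real\<times>real. G (Complex c (snd p))) \<in> borel_measurable (lborel \<Otimes>\<^sub>M lborel)"
      by (rule measurable_compose[OF measurable_snd mG])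
    have m2: "(\<lambda>p::real\<times>real. exp (Complex c (snd p) * of_real (t - fst p))) \<in> borel_measurable (lborel \<Otimes>\<^sub>M lborel)"
      unfolding Complex_eq by measurable
    have m1: "(\<lambda>p::real\<times>real. indicator {0..} (fst p) *\<^sub>R (of_real (fst p powr beta) :: complex)) \<in> borel_measurable (lborel \<Otimes>\<^sub>M lborel)"
      by measurable
    have "k = (\<lambda>p. (indicator {0..} (fst p) *\<^sub>R (of_real (fst p powr beta) :: complex)) *
                   (exp (Complex c (snd p) * of_real (t - fst p)) * G (Complex c (snd p))))"
      unfolding k_def by (auto simp: fun_eq_iff indicator_def)
    thus ?thesis using m1 m2 m3 by simp
  qed
  have nk: "(LBINT y. norm (k (w, y))) = exp (c * t) * NG * (indicator {0..} w * (w powr (beta + 1 - 1) * exp (- (c * w))))" for w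
  proof -
    have "norm (k (w, y)) = (indicator {0..} w * w powr beta * exp (c * (t - w))) * norm (G (Complex c y))" for y
      unfolding k_def by (simp add: norm_mult norm_exp_eq_Re indicator_def)
    hence "(LBINT y. norm (k (w, y))) = (indicator {0..} w * w powr beta * exp (c * (t - w))) * NG"
      unfolding NG_def by simp
    also have "exp (c * (t - w)) = exp (c * t) * exp (- (c * w))" by (simp add: right_diff_distrib exp_diff exp_minus field_simps)
    finally show ?thesis by (simp add: mult_ac)
  qed
  have ik: "integrable (lborel \<Otimes>\<^sub>M lborel) k"
  proof (rule lborel_pair.Fubini_integrable[OF mk])
    show "integrable lborel (\<lambda>w. LBINT y. norm (k (w, y)))"
      unfolding nk using gamma_scaled(1)[of "beta + 1" c] beta c by simp
    show "AE w in lborel. integrable lborel (\<lambda>y. k (w, y))"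
    proof (intro AE_I2)
      fix w
      have "integrable lborel (\<lambda>y. exp (Complex c y * of_real (t - w)) * G (Complex c y))"
        by (rule bromwich_integrable[OF gG nu c])
      thus "integrable lborel (\<lambda>y. k (w, y))" unfolding k_def by simp
    qed
  qed
  have inner_y: "(LBINT y. k (w, y)) = of_real (2 * pi) * R w" for w
  proof -
    have "(LBINT y. k (w, y)) = indicator {0..} w *\<^sub>R (of_real (w powr beta) * (LBINT y. exp (Complex c y * of_real (t - w)) * G (Complex c y)))"
      unfolding k_def by simp
    also have "(LBINT y. exp (Complex c y * of_real (t - w)) * G (Complex c y)) = of_real (2 * pi) * g (t - w)"
      unfolding g_def bromwich_lint[OF gG nu c] by simp
    finally show ?thesis unfolding R_def by (simp add: mult_ac)
  qed
  define G' where "G' s = s powr (- of_real (beta + 1)) * G s" for s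
  have gG': "good nu G'" unfolding G'_def by (rule good_mult_powr[OF gG])
  have inner_w: "(LBINT w. k (w, y)) = of_real (Gamma (beta + 1)) * (exp (Complex c y * of_real t) * G' (Complex c y))" for y
  proof -
    define s where "s = Complex c y"
    have Res: "0 < Re s" using c by (simp add: s_def)
    have "k (w, y) = (exp (s * of_real t) * G s) * (indicator {0..} w *\<^sub>R (of_real (w powr beta) * exp (- s * of_real w)))" for w
      unfolding k_def s_def by (simp add: algebra_simps exp_diff exp_minus field_simps indicator_def)
    hence "(LBINT w. k (w, y)) = (LBINT w. (exp (s * of_real t) * G s) * (indicator {0..} w *\<^sub>R (of_real (w powr beta) * exp (- s * of_real w))))"
      by (simp only:)
    also have "\<dots> = (exp (s * of_real t) * G s) * (LBINT w. indicator {0..} w *\<^sub>R (of_real (w powr beta) * exp (- s * of_real w)))"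
      by (rule integral_mult_right_zero)
    also have "\<dots> = (exp (s * of_real t) * G s) * (of_real (Gamma (beta + 1)) * s powr (- of_real (beta + 1)))"
      using laplace_powr(2)[OF beta Res] by simp
    finally show ?thesis unfolding G'_def s_def by (simp add: mult_ac)
  qed
  have "(LBINT w. of_real (2 * pi) * R w) = (LBINT y. of_real (Gamma (beta + 1)) * (exp (Complex c y * of_real t) * G' (Complex c y)))"
    using lborel_pair.Fubini_integral[of "\<lambda>w y. k (w, y)"] ik unfolding inner_y inner_w
    by (simp add: case_prod_beta' k_def) 
  also have "\<dots> = of_real (Gamma (beta + 1)) * (of_real (2 * pi) * bromwich c G' t)"
    unfolding bromwich_lint[OF gG' nu c] by simp
  finally have main: "(LBINT w. R w) = of_real (Gamma (beta + 1)) * bromwich c G' t" by simp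
  have intR: "integrable lborel R"
  proof -
    have "integrable lborel (\<lambda>w. LBINT y. k (w, y))" using lborel_pair.integrable_fst'[OF ik] .
    hence "integrable lborel (\<lambda>w. of_real (2 * pi) * R w)" unfolding inner_y .
    hence "integrable lborel (\<lambda>w. inverse (of_real (2 * pi)) * (of_real (2 * pi) * R w))" by (rule integrable_mult_right)
    moreover have "inverse (of_real (2 * pi)) * (of_real (2 * pi) * R w) = R w" for w
      using pi_gt_zero by (simp add: field_simps)
    ultimately show ?thesis by (simp only:)
  qed
  have intQ: "integrable lborel Q"
    using lborel_integrable_real_affine_iff[of "-1" Q t] intR unfolding QR by simp
  show "integrable lborel (\<lambda>x. indicator {0..t} x *\<^sub>R (of_real ((t - x) powr beta) * bromwich c G x))"
    using intQ unfolding PQ[symmetric] P_def g_def .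
  have "(LBINT x. P x) = (LBINT w. R w)"
    unfolding PQ using lborel_integral_real_affine[of "-1" Q t] unfolding QR by simp
  thus "(LBINT x. indicator {0..t} x *\<^sub>R (of_real ((t - x) powr beta) * bromwich c G x)) =
           of_real (Gamma (beta + 1)) * bromwich c (\<lambda>s. s powr (- of_real (beta + 1)) * G s) t"
    unfolding main P_def g_def G'_def .
qed

lemma Gamma_lower:
  fixes x M :: real
  assumes x: "0 \<le> x" and M: "0 < M"
  shows "M powr x * exp (- (M + 1)) \<le> Gamma (x + 1)"
proof -
  have xp: "0 < x + 1" using x by simp
  have iG: "((\<lambda>t. t powr (x + 1 - 1) / exp t) has_integral Gamma (x + 1)) {0..}"
    by (rule Gamma_integral_real[OF xp])
  have cont: "continuous_on {M..M+1} (\<lambda>t. t powr (x + 1 - 1) / exp t)"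
    using M by (intro continuous_intros) auto
  have i1: "(\<lambda>t. t powr (x + 1 - 1) / exp t) integrable_on {M..M+1}"
    by (rule integrable_continuous_interval[OF cont])
  have "integral {M..M+1} (\<lambda>t. t powr (x + 1 - 1) / exp t) \<le> integral {0..} (\<lambda>t. t powr (x + 1 - 1) / exp t)"
    using M by (intro integral_subset_le i1) (use iG in auto)
  also have "\<dots> = Gamma (x + 1)" using iG by (rule integral_unique)
  finally have le1: "integral {M..M+1} (\<lambda>t. t powr (x + 1 - 1) / exp t) \<le> Gamma (x + 1)" .
  have "integral {M..M+1} (\<lambda>t. M powr x * exp (- (M + 1))) \<le> integral {M..M+1} (\<lambda>t. t powr (x + 1 - 1) / exp t)"
  proof (rule integral_le)
    show "(\<lambda>t. M powr x * exp (- (M + 1))) integrable_on {M..M+1}"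
      by (intro integrable_continuous_interval continuous_intros)
    show "(\<lambda>t. t powr (x + 1 - 1) / exp t) integrable_on {M..M+1}" by (rule i1)
    fix t assume t: "t \<in> {M..M+1}"
    have "M powr x \<le> t powr x" using t M x by (intro powr_mono2) auto
    moreover have "exp (- (M + 1)) \<le> 1 / exp t"
    proof -
      have "exp (- (M + 1)) \<le> exp (- t)" using t by simp
      thus ?thesis by (simp add: exp_minus divide_inverse)
    qed
    ultimately have "M powr x * exp (- (M + 1)) \<le> t powr x * (1 / exp t)"
      by (intro mult_mono) auto
    thus "M powr x * exp (- (M + 1)) \<le> t powr (x + 1 - 1) / exp t" by simp
  qed
  also note le1
  finally show ?thesis by simp
qed

lemma ml_summable:
  fixes r nu :: real
  assumes r: "0 \<le> r" and nu: "0 < nu"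
  shows "summable (\<lambda>k. r ^ k / Gamma (real k * nu + 1))"
proof -
  define M where "M = max 1 ((2 * r) powr (1 / nu))"
  have M: "0 < M" "1 \<le> M" unfolding M_def by auto
  have Mnu: "2 * r \<le> M powr nu"
  proof (cases "r = 0")
    case True thus ?thesis using M by simp
  next
    case False
    hence "(2 * r) powr (1 / nu) > 0" using r by simp
    have "2 * r = ((2 * r) powr (1 / nu)) powr nu" using False r nu by (simp add: powr_powr)
    also have "\<dots> \<le> M powr nu" unfolding M_def using nu by (intro powr_mono2) auto
    finally show ?thesis .
  qed
  have MnuP: "0 < M powr nu" using M by simp
  show ?thesis
  proof (rule summable_comparison_test')
    show "summable (\<lambda>k. exp (M + 1) * (1/2) ^ k)" by (intro summable_mult summable_geometric) auto
    fix k :: nat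
    have G: "M powr (real k * nu) * exp (- (M + 1)) \<le> Gamma (real k * nu + 1)"
      using Gamma_lower[of "real k * nu" M] nu M by auto
    have Gp: "0 < Gamma (real k * nu + 1)" using nu by (intro Gamma_real_pos) (simp add: add_nonneg_pos)
    have Mk: "M powr (real k * nu) = (M powr nu) ^ k"
      using M by (simp add: powr_realpow[symmetric] powr_powr mult.commute)
    have "r ^ k / Gamma (real k * nu + 1) \<le> r ^ k / (M powr (real k * nu) * exp (- (M + 1)))"
      using G Gp M by (intro divide_left_mono) (auto intro!: mult_pos_pos simp: r)
    also have "\<dots> = exp (M + 1) * (r / M powr nu) ^ k"
      unfolding Mk exp_minus[of "M + 1"] using MnuP by (simp add: power_divide field_simps)
    also have "\<dots> \<le> exp (M + 1) * (1/2) ^ k"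
    proof -
      have "r / M powr nu \<le> 1/2" using Mnu MnuP by (simp add: field_simps)
      hence "(r / M powr nu) ^ k \<le> (1/2) ^ k" using r MnuP by (intro power_mono) auto
      thus ?thesis by simp
    qed
    finally show "norm (r ^ k / Gamma (real k * nu + 1)) \<le> exp (M + 1) * (1/2) ^ k"
      using Gp r by simp
  qed
qed

lemma ml_sums:
  fixes z nu :: real
  assumes nu: "0 < nu"
  shows "(\<lambda>k. z ^ k / Gamma (real k * nu + 1)) sums mittag_leffler nu z"
proof -
  have "summable (\<lambda>k. norm (z ^ k / Gamma (real k * nu + 1)))"
  proof -
    have "summable (\<lambda>k. \<bar>z\<bar> ^ k / Gamma (real k * nu + 1))" by (rule ml_summable[OF _ nu]) simp
    moreover have "norm (z ^ k / Gamma (real k * nu + 1)) = \<bar>z\<bar> ^ k / Gamma (real k * nu + 1)" for k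
    proof -
      have "0 < Gamma (real k * nu + 1)" using nu by (intro Gamma_real_pos) (simp add: add_nonneg_pos)
      thus ?thesis by (simp add: power_abs)
    qed
    ultimately show ?thesis by simp
  qed
  hence "summable (\<lambda>k. z ^ k / Gamma (real k * nu + 1))" by (rule summable_norm_cancel)
  thus ?thesis unfolding mittag_leffler_def by (rule summable_sums)
qed

lemma bromwich_measurable:
  assumes gG: "good nu G" and nu: "0 < nu" and c: "0 < c"
  shows "(\<lambda>x. bromwich c G x) \<in> borel_measurable lborel"
proof -
  have mG: "(\<lambda>y. G (Complex c y)) \<in> borel_measurable lborel"
    using borel_measurable_continuous_onI[OF good_line_cont[OF gG c]] by simp
  have m3: "(\<lambda>p::real\<times>real. G (Complex c (snd p))) \<in> borel_measurable (lborel \<Otimes>\<^sub>M lborel)"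
    by (rule measurable_compose[OF measurable_snd mG])
  have m2: "(\<lambda>p::real\<times>real. exp (Complex c (snd p) * of_real (fst p))) \<in> borel_measurable (lborel \<Otimes>\<^sub>M lborel)"
    unfolding Complex_eq by measurable
  have "(\<lambda>(x, y). exp (Complex c y * of_real x) * G (Complex c y)) \<in> borel_measurable (lborel \<Otimes>\<^sub>M lborel)"
    using m2 m3 by (simp add: case_prod_beta')
  hence "(\<lambda>x. LBINT y. exp (Complex c y * of_real x) * G (Complex c y)) \<in> borel_measurable lborel"
    by (rule lborel.borel_measurable_lebesgue_integral)
  hence "(\<lambda>x. 1 / (2 * pi) * (LBINT y. exp (Complex c y * of_real x) * G (Complex c y))) \<in> borel_measurable lborel"
    by measurable
  thus ?thesis unfolding bromwich_lint[OF gG nu c] .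
qed

lemma ml_measurable:
  assumes nu: "0 < nu"
  shows "mittag_leffler nu \<in> borel_measurable borel"
proof (rule borel_measurable_LIMSEQ_real)
  fix z :: real
  show "(\<lambda>n. \<Sum>k<n. z ^ k / Gamma (real k * nu + 1)) \<longlonglongrightarrow> mittag_leffler nu z"
    using ml_sums[OF nu, of z] unfolding sums_def .
next
  fix n show "(\<lambda>z. \<Sum>k<n. z ^ k / Gamma (real k * nu + 1)) \<in> borel_measurable borel" by measurable
qed

lemma geom_powr:
  fixes s :: complex and nu :: real
  assumes s1: "1 < cmod s" and nu: "0 < nu"
  shows "(\<lambda>k. (-1) ^ k * s powr (- of_real (real k * nu + 1))) sums (1 / (s * (1 + s powr (- of_real nu))))"
proof -
  have sn: "s \<noteq> 0" using s1 by auto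
  define q where "q = - (s powr (- of_real nu))"
  have nq: "norm q < 1"
  proof -
    have "norm q = cmod s powr (- nu)" unfolding q_def by (simp add: norm_powr_real_powr')
    also have "\<dots> < 1" using s1 nu by (simp add: powr_less_one)
    finally show ?thesis .
  qed
  have "(\<lambda>k. inverse s * q ^ k) sums (inverse s * (1 / (1 - q)))"
    by (rule sums_mult[OF geometric_sums[OF nq]])
  moreover have "inverse s * q ^ k = (-1) ^ k * s powr (- of_real (real k * nu + 1))" for k
  proof -
    have "s powr (- of_real (real k * nu + 1)) = s powr (-1) * s powr (of_nat k * (- of_real nu))"
    proof -
      have "- of_real (real k * nu + 1) = (-1 :: complex) + of_nat k * (- of_real nu)" by simp
      thus ?thesis by (simp only: powr_add)
    qed
    also have "\<dots> = s powr (-1) * (s powr (- of_real nu)) ^ k" using powr_power[OF sn, of "- of_real nu" k] by simp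
    also have "s powr (-1) = inverse s" using sn by (simp add: powr_minus)
    moreover have "q ^ k = (-1) ^ k * (s powr (- of_real nu)) ^ k" unfolding q_def by (rule power_minus)
    ultimately show ?thesis by (simp add: mult_ac)
  qed
  moreover have "inverse s * (1 / (1 - q)) = 1 / (s * (1 + s powr (- of_real nu)))"
    unfolding q_def by (simp add: divide_inverse inverse_mult_distrib)
  ultimately show ?thesis by simp
qed

lemma conv_ml_part1:
  assumes gG: "good nu G" and nu: "0 < nu" and c0: "0 < c" and t: "0 \<le> t"
  shows "integrable lborel (\<lambda>x. indicator {0..t} x *\<^sub>R (of_real (mittag_leffler nu (- ((t - x) powr nu))) * bromwich c G x))"
    and "(LBINT x. indicator {0..t} x *\<^sub>R (of_real (mittag_leffler nu (- ((t - x) powr nu))) * bromwich c G x)) =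
           (\<Sum>k. (-1) ^ k * bromwich c (\<lambda>s. s powr (- of_real (real k * nu + 1)) * G s) t)"
proof -
  define g where "g x = bromwich c G x" for x
  have mg[measurable]: "g \<in> borel_measurable borel"
    using bromwich_measurable[OF gG nu c0] unfolding g_def by simp
  define gam where "gam k = Gamma (real k * nu + 1)" for k :: nat
  have gam_pos: "0 < gam k" for k unfolding gam_def using nu by (intro Gamma_real_pos) (simp add: add_nonneg_pos)
  have gam0: "gam 0 = 1" unfolding gam_def by simp
  define F where "F k x = indicator {0..t} x *\<^sub>R (of_real ((- ((t - x) powr nu)) ^ k / gam k) * g x)" for k x
  define RL where "RL k x = indicator {0..t} x *\<^sub>R (of_real ((t - x) powr (real k * nu)) * g x)" for k x
  define Gk where "Gk k s = s powr (- of_real (real k * nu + 1)) * G s" for k s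
  have RLi: "integrable lborel (RL k)" for k
    using RL_bromwich(1)[OF gG nu c0, of "real k * nu" t] nu unfolding RL_def g_def by auto
  have RLI: "(LBINT x. RL k x) = of_real (gam k) * bromwich c (Gk k) t" for k
    using RL_bromwich(2)[OF gG nu c0, of "real k * nu" t] nu unfolding RL_def g_def gam_def Gk_def by auto
  have mF[measurable]: "F k \<in> borel_measurable borel" for k unfolding F_def by measurable
  have FRL: "AE x in lborel. of_real ((-1) ^ k / gam k) * RL k x = F k x" for k
    using AE_lborel_singleton[of t]
  proof eventually_elim
    case (elim x)
    show ?case
    proof (cases "x \<in> {0..t}")
      case True
      hence tx: "t - x > 0" using elim by auto
      have "(- ((t - x) powr nu)) ^ k = (-1) ^ k * ((t - x) powr nu) ^ k" by (rule power_minus)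
      also have "((t - x) powr nu) ^ k = (t - x) powr (real k * nu)" using tx by (simp add: powr_power)
      finally have "(- ((t - x) powr nu)) ^ k = (-1) ^ k * (t - x) powr (real k * nu)" .
      thus ?thesis unfolding F_def RL_def using True by simp
    next
      case False thus ?thesis unfolding F_def RL_def by simp
    qed
  qed
  have Fi: "integrable lborel (F k)" for k
  proof (rule integrable_cong_AE_imp[OF _ _ FRL])
    show "integrable lborel (\<lambda>x. of_real ((-1) ^ k / gam k) * RL k x)" using RLi by simp
  qed simp
  have FI: "(LBINT x. F k x) = (-1) ^ k * bromwich c (Gk k) t" for k
  proof -
    have "(LBINT x. F k x) = (LBINT x. of_real ((-1) ^ k / gam k) * RL k x)"
      by (rule integral_cong_AE[symmetric]) (use FRL RLi in auto)
    also have "\<dots> = of_real ((-1) ^ k / gam k) * (LBINT x. RL k x)" by simp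
    also have "\<dots> = (-1) ^ k * bromwich c (Gk k) t" unfolding RLI using gam_pos[of k] by simp
    finally show ?thesis .
  qed
  have Fsum: "(\<lambda>k. F k x) sums (indicator {0..t} x *\<^sub>R (of_real (mittag_leffler nu (- ((t - x) powr nu))) * g x))" for x
  proof (cases "x \<in> {0..t}")
    case True
    have "(\<lambda>k. of_real ((- ((t - x) powr nu)) ^ k / gam k) :: complex) sums of_real (mittag_leffler nu (- ((t - x) powr nu)))"
      using sums_of_real[OF ml_sums[OF nu]] unfolding gam_def .
    hence "(\<lambda>k. of_real ((- ((t - x) powr nu)) ^ k / gam k) * g x) sums (of_real (mittag_leffler nu (- ((t - x) powr nu))) * g x)"
      by (rule sums_mult2)
    thus ?thesis unfolding F_def using True by simp
  next
    case False thus ?thesis unfolding F_def by simp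
  qed
  have nF: "norm (F k x) \<le> (t powr nu) ^ k / gam k * norm (F 0 x)" for k x
  proof (cases "x \<in> {0..t}")
    case True
    have "\<bar>(- ((t - x) powr nu)) ^ k\<bar> = ((t - x) powr nu) ^ k" by (simp add: power_abs)
    also have "\<dots> \<le> (t powr nu) ^ k" using True nu by (intro power_mono powr_mono2) auto
    finally have a: "\<bar>(- ((t - x) powr nu)) ^ k\<bar> \<le> (t powr nu) ^ k" .
    have "norm (F k x) = \<bar>(- ((t - x) powr nu)) ^ k\<bar> / gam k * norm (g x)"
      unfolding F_def using True gam_pos[of k] by (simp add: norm_mult norm_divide norm_power)
    also have "\<dots> \<le> (t powr nu) ^ k / gam k * norm (g x)"
      using a gam_pos[of k] by (intro mult_right_mono divide_right_mono) auto
    also have "norm (g x) = norm (F 0 x)" unfolding F_def using True gam0 by simp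
    finally show ?thesis .
  next
    case False thus ?thesis unfolding F_def by simp
  qed
  have sml: "summable (\<lambda>k. (t powr nu) ^ k / gam k)" unfolding gam_def by (rule ml_summable[OF _ nu]) simp
  have Fnsum: "summable (\<lambda>k. norm (F k x))" for x
    by (rule summable_comparison_test'[OF summable_mult2[OF sml, of "norm (F 0 x)"]]) (use nF in auto)
  have LIsum: "summable (\<lambda>k. LBINT x. norm (F k x))"
  proof (rule summable_comparison_test'[OF summable_mult2[OF sml, of "LBINT x. norm (F 0 x)"]])
    fix k
    have "(LBINT x. norm (F k x)) \<le> (LBINT x. (t powr nu) ^ k / gam k * norm (F 0 x))"
      by (intro integral_mono) (use Fi nF in auto)
    also have "\<dots> = (t powr nu) ^ k / gam k * (LBINT x. norm (F 0 x))" by simp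
    finally show "norm (LBINT x. norm (F k x)) \<le> (t powr nu) ^ k / gam k * (LBINT x. norm (F 0 x))" by simp
  qed
  have eqS: "(\<lambda>x. indicator {0..t} x *\<^sub>R (of_real (mittag_leffler nu (- ((t - x) powr nu))) * g x)) = (\<lambda>x. \<Sum>k. F k x)"
    using sums_unique[OF Fsum] by (intro ext) simp
  show "integrable lborel (\<lambda>x. indicator {0..t} x *\<^sub>R (of_real (mittag_leffler nu (- ((t - x) powr nu))) * bromwich c G x))"
    using integrable_suminf[OF Fi _ LIsum] Fnsum unfolding eqS[unfolded g_def] by simp
  have "(LBINT x. indicator {0..t} x *\<^sub>R (of_real (mittag_leffler nu (- ((t - x) powr nu))) * g x)) = (\<Sum>k. LBINT x. F k x)"
    unfolding eqS using integral_suminf[OF Fi _ LIsum] Fnsum by simp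
  thus "(LBINT x. indicator {0..t} x *\<^sub>R (of_real (mittag_leffler nu (- ((t - x) powr nu))) * bromwich c G x)) =
           (\<Sum>k. (-1) ^ k * bromwich c (\<lambda>s. s powr (- of_real (real k * nu + 1)) * G s) t)"
    unfolding FI g_def Gk_def .
qed


lemma conv_ml_part2:
  assumes gG: "good nu G" and nu: "0 < nu" and c: "1 < c"
  shows "(\<Sum>k. (-1) ^ k * bromwich c (\<lambda>s. s powr (- of_real (real k * nu + 1)) * G s) t) =
           bromwich c (\<lambda>s. G s / (s * (1 + s powr (- of_real nu)))) t"
proof -
  have c0: "0 < c" using c by simp
  define Gk where "Gk k s = s powr (- of_real (real k * nu + 1)) * G s" for k s
  have gGk: "good nu (Gk k)" for k unfolding Gk_def by (rule good_mult_powr[OF gG])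
  define e where "e y = exp (Complex c y * of_real t) * G (Complex c y)" for y
  have ie: "integrable lborel e" unfolding e_def by (rule bromwich_integrable[OF gG nu c0])
  define H where "H k y = (-1) ^ k * (exp (Complex c y * of_real t) * Gk k (Complex c y))" for k y
  have Hi: "integrable lborel (H k)" for k
    unfolding H_def using bromwich_integrable[OF gGk[of k] nu c0, of t] by simp
  have HI: "(-1) ^ k * bromwich c (Gk k) t = 1 / (2 * pi) * (LBINT y. H k y)" for k
    unfolding H_def bromwich_lint[OF gGk nu c0] by simp
  define q where "q = c powr (- nu)"
  have q0: "0 \<le> q" and q1: "q < 1" unfolding q_def using c nu by (auto simp: powr_less_one)
  have nH: "norm (H k y) \<le> q ^ k * norm (e y)" for k y
  proof -
    define s where "s = Complex c y"
    have ns: "c \<le> cmod s" unfolding s_def by (rule cmod_Complex_ge_Re)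
    have ns1: "1 \<le> cmod s" using ns c by simp
    have "norm (s powr (- of_real (real k * nu + 1))) = cmod s powr (- (real k * nu + 1))"
      by (simp add: norm_powr_real_powr')
    also have "\<dots> \<le> cmod s powr (- (real k * nu))" using ns1 by (intro powr_mono) auto
    also have "\<dots> \<le> c powr (- (real k * nu))" using ns c0 nu by (intro powr_mono2') auto
    also have "\<dots> = q ^ k" unfolding q_def using c0 by (simp add: powr_power mult.commute)
    finally have a: "norm (s powr (- of_real (real k * nu + 1))) \<le> q ^ k" .
    have "norm (H k y) = norm (s powr (- of_real (real k * nu + 1))) * norm (e y)"
      unfolding H_def e_def Gk_def s_def by (simp add: norm_mult norm_power)
    also have "\<dots> \<le> q ^ k * norm (e y)" using a by (intro mult_right_mono) auto
    finally show ?thesis .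
  qed
  have sq: "summable (\<lambda>k. q ^ k)" using q0 q1 by (intro summable_geometric) simp
  have Hnsum: "summable (\<lambda>k. norm (H k y))" for y
    by (rule summable_comparison_test'[OF summable_mult2[OF sq, of "norm (e y)"]]) (use nH in auto)
  have LHsum: "summable (\<lambda>k. LBINT y. norm (H k y))"
  proof (rule summable_comparison_test'[OF summable_mult2[OF sq, of "LBINT y. norm (e y)"]])
    fix k
    have "(LBINT y. norm (H k y)) \<le> (LBINT y. q ^ k * norm (e y))"
      by (intro integral_mono) (use Hi nH ie in auto)
    also have "\<dots> = q ^ k * (LBINT y. norm (e y))" by simp
    finally show "norm (LBINT y. norm (H k y)) \<le> q ^ k * (LBINT y. norm (e y))" by simp
  qed
  have Hsum: "(\<lambda>k. H k y) sums (exp (Complex c y * of_real t) * (G (Complex c y) / (Complex c y * (1 + Complex c y powr (- of_real nu)))))" for y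
  proof -
    have s1: "1 < cmod (Complex c y)" using cmod_Complex_ge_Re[of c y] c by simp
    have "(\<lambda>k. e y * ((-1) ^ k * Complex c y powr (- of_real (real k * nu + 1)))) sums
            (e y * (1 / (Complex c y * (1 + Complex c y powr (- of_real nu)))))"
      by (rule sums_mult[OF geom_powr[OF s1 nu]])
    moreover have "e y * ((-1) ^ k * Complex c y powr (- of_real (real k * nu + 1))) = H k y" for k
      unfolding e_def H_def Gk_def by (simp add: mult_ac)
    ultimately show ?thesis unfolding e_def by (simp add: mult_ac)
  qed
  define Gs where "Gs s = G s / (s * (1 + s powr (- of_real nu)))" for s
  have eqS: "(\<lambda>y. exp (Complex c y * of_real t) * Gs (Complex c y)) = (\<lambda>y. \<Sum>k. H k y)"
    using sums_unique[OF Hsum] unfolding Gs_def by (intro ext) simp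
  have iS: "integrable lborel (\<lambda>y. exp (Complex c y * of_real t) * Gs (Complex c y))"
    unfolding eqS using integrable_suminf[OF Hi _ LHsum] Hnsum by simp
  have IS: "(LBINT y. exp (Complex c y * of_real t) * Gs (Complex c y)) = (\<Sum>k. LBINT y. H k y)"
    unfolding eqS using integral_suminf[OF Hi _ LHsum] Hnsum by simp
  have sI: "summable (\<lambda>k. LBINT y. H k y)"
  proof (rule summable_comparison_test'[OF LHsum])
    fix k show "norm (LBINT y. H k y) \<le> (LBINT y. norm (H k y))"
      by (rule integral_norm_bound)
  qed
  have "(\<Sum>k. (-1) ^ k * bromwich c (Gk k) t) = (\<Sum>k. 1 / (2 * pi) * (LBINT y. H k y))"
    unfolding HI ..
  also have "\<dots> = 1 / (2 * pi) * (\<Sum>k. LBINT y. H k y)" by (rule suminf_mult[OF sI])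
  also have "\<dots> = bromwich c Gs t"
    unfolding bromwich_def IS[symmetric] integral_lborel[OF iS] ..
  finally show ?thesis unfolding Gk_def Gs_def .
qed

lemma kappa_pos: assumes "0 < nu" "nu < 1" shows "0 < cos (pi * nu / 2)"
  using assms by (intro cos_gt_zero) (auto simp: field_simps)

lemma good_basic:
  assumes nu: "0 < nu" "nu < 1" and b: "0 < b"
  shows "good nu (\<lambda>s. s powr (- of_real rho) * exp (- of_real b * s powr of_real nu))"
  unfolding good_def
proof (intro conjI exI allI impI)
  show "(\<lambda>s. s powr (- of_real rho) * exp (- of_real b * s powr of_real nu)) holomorphic_on {s. 0 < Re s}"
    by (intro holomorphic_intros holo_powr_const)
  show "0 < b * cos (pi * nu / 2)" using b kappa_pos[OF nu] by simp
  fix s :: complex assume s: "0 < Re s"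
  have "norm (s powr (- of_real rho) * exp (- of_real b * s powr of_real nu)) =
        cmod s powr (- rho) * norm (exp (- of_real b * s powr of_real nu))"
    by (simp add: norm_mult norm_powr_real_powr')
  also have "\<dots> \<le> cmod s powr (- rho) * exp (- (b * cos (pi * nu / 2)) * cmod s powr nu)"
    using norm_exp_powr_le[OF s nu(1) _, of b] nu b by (intro mult_left_mono) auto
  finally show "norm (s powr (- of_real rho) * exp (- of_real b * s powr of_real nu)) \<le>
        1 * cmod s powr (- rho) * exp (- (b * cos (pi * nu / 2)) * cmod s powr nu)" by simp
qed

lemma good_cmult:
  assumes "good nu F"
  shows "good nu (\<lambda>s. A * F s)"
proof -
  obtain C p b where b: "0 < b" and bnd: "\<And>s. 0 < Re s \<Longrightarrow> norm (F s) \<le> C * norm s powr p * exp (- b * norm s powr nu)"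
    and hol: "F holomorphic_on {s. 0 < Re s}"
    using assms unfolding good_def by blast
  have "norm (A * F s) \<le> (norm A * C) * norm s powr p * exp (- b * norm s powr nu)" if "0 < Re s" for s
    using bnd[OF that] by (simp add: norm_mult mult.assoc mult_left_mono)
  moreover have "(\<lambda>s. A * F s) holomorphic_on {s. 0 < Re s}" using hol by (intro holomorphic_intros)
  ultimately show ?thesis unfolding good_def using b by blast
qed

lemma one_plus_powr_norm:
  assumes "0 < Re s" "0 < nu" "nu \<le> 1"
  shows "1 \<le> norm (1 + s powr of_real nu)"
proof -
  have h1: "- (pi / 2) \<le> pi * nu / 2" using assms pi_gt_zero mult_pos_pos[of pi nu] by linarith
  have h2: "pi * nu / 2 \<le> pi / 2" using assms pi_gt_zero by (simp add: field_simps)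
  have "0 \<le> cos (pi * nu / 2) * norm s powr nu"
    using h1 h2 by (intro mult_nonneg_nonneg cos_ge_zero) auto
  hence "0 \<le> Re (s powr of_real nu)" using Re_powr_ge[OF assms] by linarith
  hence "1 \<le> Re (1 + s powr of_real nu)" by simp
  also have "\<dots> \<le> norm (1 + s powr of_real nu)" by (rule complex_Re_le_cmod)
  finally show ?thesis .
qed

lemma good_H:
  assumes nu: "0 < nu" "nu < 1" and lam: "0 < lam"
  shows "good nu (\<lambda>s. s powr (- of_real mu) * exp (- of_real lam * s powr of_real nu) / (1 + s powr of_real nu))"
proof -
  obtain C p b where b: "0 < b" and bnd: "\<And>s. 0 < Re s \<Longrightarrow> norm (s powr (- of_real mu) * exp (- of_real lam * s powr of_real nu)) \<le> C * norm s powr p * exp (- b * norm s powr nu)"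
    and hol: "(\<lambda>s. s powr (- of_real mu) * exp (- of_real lam * s powr of_real nu)) holomorphic_on {s. 0 < Re s}"
    using good_basic[OF nu lam, of mu] unfolding good_def by blast
  have nz: "1 + s powr of_real nu \<noteq> 0" if "0 < Re s" for s
    using one_plus_powr_norm[OF that nu(1)] nu by auto
  have "(\<lambda>s. s powr (- of_real mu) * exp (- of_real lam * s powr of_real nu) / (1 + s powr of_real nu)) holomorphic_on {s. 0 < Re s}"
    using hol nz by (intro holomorphic_on_divide holomorphic_intros holo_powr_const) auto
  moreover have "norm (s powr (- of_real mu) * exp (- of_real lam * s powr of_real nu) / (1 + s powr of_real nu)) \<le> C * norm s powr p * exp (- b * norm s powr nu)"
    if s: "0 < Re s" for s
  proof -
    have n1: "1 \<le> norm (1 + s powr of_real nu)" using one_plus_powr_norm[OF s nu(1)] nu by simp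
    have "norm (s powr (- of_real mu) * exp (- of_real lam * s powr of_real nu) / (1 + s powr of_real nu))
          = norm (s powr (- of_real mu) * exp (- of_real lam * s powr of_real nu)) / norm (1 + s powr of_real nu)"
      by (simp add: norm_divide)
    also have "\<dots> \<le> norm (s powr (- of_real mu) * exp (- of_real lam * s powr of_real nu))"
    proof -
      let ?X = "norm (s powr (- of_real mu) * exp (- of_real lam * s powr of_real nu))"
      have "?X \<le> ?X * norm (1 + s powr of_real nu)" using n1 by (simp add: mult_le_cancel_left1)
      moreover have N0: "0 < norm (1 + s powr of_real nu)" using n1 by linarith
      ultimately show ?thesis by (simp add: pos_divide_le_eq[OF N0])
    qed
    also have "\<dots> \<le> C * norm s powr p * exp (- b * norm s powr nu)" by (rule bnd[OF s])
    finally show ?thesis .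
  qed
  ultimately show ?thesis unfolding good_def using b by blast
qed

lemma bromwich_cong:
  assumes "\<And>y. F (Complex c y) = F' (Complex c y)"
  shows "bromwich c F x = bromwich c F' x"
  unfolding bromwich_def using assms by simp

lemma bromwich_cmult:
  fixes F :: "complex \<Rightarrow> complex"
  assumes "good nu F" "0 < nu" "0 < c"
  shows "bromwich c (\<lambda>s. A * F s) x = A * bromwich c F x"
  using assms unfolding bromwich_lint[OF assms] bromwich_lint[OF good_cmult[OF assms(1)] assms(2,3)]
  by (simp add: mult_ac)

lemma f_fun_scale:
  assumes nu: "0 < nu" "nu < 1" and a: "0 < a"
  shows "f_fun nu rho (x / a) = bromwich (1 / a)
           (\<lambda>s. of_real (a powr (1 - rho)) * (s powr (- of_real rho) * exp (- of_real (a powr nu) * s powr of_real nu))) x"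
proof -
  define F where "F s = s powr (- of_real rho) * exp (- of_real 1 * s powr of_real nu)" for s :: complex
  have gF: "good nu F" unfolding F_def by (rule good_basic[OF nu]) simp
  define Fa where "Fa s = of_real (a powr (1 - rho)) * (s powr (- of_real rho) * exp (- of_real (a powr nu) * s powr of_real nu))" for s :: complex
  have gFa: "good nu Fa" unfolding Fa_def by (intro good_cmult good_basic[OF nu]) (use a in simp)
  define h where "h y = exp (Complex 1 y * of_real (x / a)) * F (Complex 1 y)" for y
  have "f_fun nu rho (x / a) = bromwich 1 F (x / a)" unfolding f_fun_def F_def by simp
  also have "\<dots> = 1 / (2 * pi) * (LBINT y. h y)" unfolding h_def by (rule bromwich_lint[OF gF nu(1)]) simp
  also have "(LBINT y. h y) = a *\<^sub>R (LBINT y. h (0 + a * y))"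
    using lborel_integral_real_affine[of a h 0] a by simp
  also have "(LBINT y. h (0 + a * y)) = (LBINT y. exp (Complex (1 / a) y * of_real x) * (Fa (Complex (1 / a) y) / of_real a))"
  proof -
    have "h (0 + a * y) = exp (Complex (1 / a) y * of_real x) * (Fa (Complex (1 / a) y) / of_real a)" for y
    proof -
      define s where "s = Complex (1 / a) y"
      have sC: "Complex 1 (a * y) = of_real a * s" using a unfolding s_def by (simp add: Complex_eq field_simps)
      have sn: "s \<noteq> 0" using a unfolding s_def by (auto simp: Complex_eq_0)
      have e1: "Complex 1 (a * y) * of_real (x / a) = s * of_real x" unfolding sC using a by (simp add: field_simps)
      have p1: "(of_real a * s) powr (- of_real rho) = of_real (a powr (- rho)) * s powr (- of_real rho)"
        using powr_times_of_real[OF a sn] a by (simp add: powr_of_real[symmetric])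
      have p2: "(of_real a * s) powr (of_real nu) = of_real (a powr nu) * s powr (of_real nu)"
        using powr_times_of_real[OF a sn] a by (simp add: powr_of_real[symmetric])
      have p3: "of_real (a powr (- rho)) = (of_real (a powr (1 - rho)) / of_real a :: complex)"
      proof -
        have r: "a powr (- rho) = a powr (1 - rho) / a" using a by (simp add: powr_diff powr_minus_divide)
        show ?thesis unfolding r by simp
      qed
      have "h (0 + a * y) = exp (Complex 1 (a * y) * of_real (x / a)) * F (Complex 1 (a * y))"
        unfolding h_def by simp
      also have "\<dots> = exp (s * of_real x) * F (of_real a * s)" by (subst e1) (simp only: sC)
      also have "F (of_real a * s) = of_real (a powr (- rho)) * s powr (- of_real rho) * exp (- (of_real (a powr nu) * s powr of_real nu))"
        unfolding F_def p1 p2 by simp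
      finally show ?thesis unfolding Fa_def s_def[symmetric] p3 by (simp add: mult_ac)
    qed
    thus ?thesis by simp
  qed
  also have "\<dots> = (LBINT y. exp (Complex (1 / a) y * of_real x) * Fa (Complex (1 / a) y)) / of_real a"
    by simp
  finally have "f_fun nu rho (x / a) = 1 / (2 * pi) * (LBINT y. exp (Complex (1 / a) y * of_real x) * Fa (Complex (1 / a) y))"
    using a by (simp add: scaleR_conv_of_real)
  also have "\<dots> = bromwich (1 / a) Fa x" by (rule bromwich_lint[OF gFa nu(1), symmetric]) (use a in simp)
  finally show ?thesis unfolding Fa_def .
qed

lemma inner_exp:
  fixes w :: complex and lam :: real
  assumes w: "0 \<le> Re w"
  shows "integrable lborel (\<lambda>u. indicator {lam..} u *\<^sub>R (exp (- (of_real u - of_real lam)) * exp (- of_real u * w)))"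
    and "(LBINT u. indicator {lam..} u *\<^sub>R (exp (- (of_real u - of_real lam)) * exp (- of_real u * w))) = exp (- of_real lam * w) / (1 + w)"
proof -
  define v where "v = 1 + w"
  have v: "0 < Re v" using w by (simp add: v_def)
  have vn: "v \<noteq> 0" using v by auto
  define L where "L x = indicator {0..} x *\<^sub>R (of_real (x powr (0::real)) * exp (- v * of_real x))" for x :: real
  define L0 where "L0 x = indicator {0..} x *\<^sub>R exp (- v * of_real x)" for x :: real
  have Li: "integrable lborel L" unfolding L_def using laplace_powr(1)[of 0 v] v by simp
  have LI: "(LBINT x. L x) = 1 / v"
  proof -
    have "(LBINT x. L x) = of_real (Gamma (0 + 1)) * v powr (- of_real (0 + 1))"
      unfolding L_def using laplace_powr(2)[of 0 v] v by simp
    also have "\<dots> = 1 / v" using vn by (simp add: powr_minus divide_inverse)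
    finally show ?thesis .
  qed
  have mL[measurable]: "L \<in> borel_measurable borel" unfolding L_def by measurable
  have mL0[measurable]: "L0 \<in> borel_measurable borel" unfolding L0_def by measurable
  have AEL: "AE x in lborel. L x = L0 x"
    using AE_lborel_singleton[of 0] by eventually_elim (auto simp: L_def L0_def indicator_def)
  have L0i: "integrable lborel L0" by (rule integrable_cong_AE_imp[OF Li _ AEL]) simp
  have L0I: "(LBINT x. L0 x) = 1 / v"
    using integral_cong_AE[OF _ _ AEL] LI by simp
  define f where "f u = indicator {lam..} u *\<^sub>R (exp (- (of_real u - of_real lam)) * exp (- of_real u * w))" for u :: real
  have fL: "f (lam + 1 * x) = exp (- of_real lam * w) * L0 x" for x
  proof (cases "x \<ge> 0")
    case True
    have "exp (- (of_real (lam + x) - of_real lam)) * exp (- of_real (lam + x) * w) = exp (- of_real lam * w) * exp (- v * of_real x)"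
      unfolding v_def by (simp add: exp_add[symmetric] algebra_simps)
    thus ?thesis using True unfolding f_def L0_def by simp
  next
    case False thus ?thesis unfolding f_def L0_def by simp
  qed
  have "integrable lborel (\<lambda>x. f (lam + 1 * x))" unfolding fL using L0i by simp
  thus "integrable lborel (\<lambda>u. indicator {lam..} u *\<^sub>R (exp (- (of_real u - of_real lam)) * exp (- of_real u * w)))"
    using lborel_integrable_real_affine_iff[of 1 f lam] unfolding f_def by simp
  have "(LBINT u. f u) = (LBINT x. f (lam + 1 * x))" using lborel_integral_real_affine[of 1 f lam] by simp
  also have "\<dots> = exp (- of_real lam * w) * (1 / v)" unfolding fL L0I[symmetric] by simp
  finally show "(LBINT u. indicator {lam..} u *\<^sub>R (exp (- (of_real u - of_real lam)) * exp (- of_real u * w))) = exp (- of_real lam * w) / (1 + w)"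
    unfolding f_def v_def by simp
qed

lemma line_powr_cont: "continuous_on UNIV (\<lambda>y. Complex 1 y powr a)"
proof -
  have "continuous_on {s. 0 < Re s} (\<lambda>s. s powr a)"
    using holo_powr_const holomorphic_on_imp_continuous_on by blast
  thus ?thesis by (rule continuous_on_compose2[OF _ continuous_Complex_line]) auto
qed

lemma LHS_integral:
  assumes nu: "0 < nu" "nu < 1" and mu: "0 \<le> mu" and lam: "0 < lam"
  shows "((\<lambda>u. exp (- (of_real u - of_real lam)) * K_fun nu mu t u) has_integral
           bromwich 1 (\<lambda>s. s powr (- of_real mu) * exp (- of_real lam * s powr of_real nu) / (1 + s powr of_real nu)) t) {lam..}"
proof -
  define H where "H s = s powr (- of_real mu) * exp (- of_real lam * s powr of_real nu) / (1 + s powr of_real nu)" for s :: complex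
  have gH: "good nu H" unfolding H_def by (rule good_H[OF nu lam])
  define Ku where "Ku u s = s powr (- of_real mu) * exp (- of_real u * s powr of_real nu)" for u :: real and s :: complex
  have K_eq: "K_fun nu mu t u = bromwich 1 (Ku u) t" for u unfolding K_fun_def Ku_def ..
  define kap where "kap = cos (pi * nu / 2)"
  have kap: "0 < kap" unfolding kap_def by (rule kappa_pos[OF nu])
  define m where "m = (\<lambda>(u::real, y::real). indicator {lam..} u *\<^sub>R (exp (- (of_real u - of_real lam)) *
                         (exp (Complex 1 y * of_real t) * Ku u (Complex 1 y))))"
  define D where "D = (\<lambda>(u::real, y::real). indicator {lam..} u * exp (- (u - lam)) * (exp t * exp (- (lam * kap) * \<bar>y\<bar> powr nu)))"
  have P1[measurable]: "(\<lambda>p::real\<times>real. Complex 1 (snd p) powr (- of_real mu)) \<in> borel_measurable (lborel \<Otimes>\<^sub>M lborel)"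
    using borel_measurable_continuous_onI[OF line_powr_cont] by (intro measurable_compose[OF measurable_snd]) simp
  have P2[measurable]: "(\<lambda>p::real\<times>real. Complex 1 (snd p) powr (of_real nu)) \<in> borel_measurable (lborel \<Otimes>\<^sub>M lborel)"
    using borel_measurable_continuous_onI[OF line_powr_cont] by (intro measurable_compose[OF measurable_snd]) simp
  have P3[measurable]: "(\<lambda>p::real\<times>real. exp (Complex 1 (snd p) * of_real t)) \<in> borel_measurable (lborel \<Otimes>\<^sub>M lborel)"
    unfolding Complex_eq by measurable
  have mm: "m \<in> borel_measurable (lborel \<Otimes>\<^sub>M lborel)"
  proof -
    have "m = (\<lambda>p. indicator {lam..} (fst p) *\<^sub>R (exp (- (of_real (fst p) - of_real lam)) *
                   (exp (Complex 1 (snd p) * of_real t) * (Complex 1 (snd p) powr (- of_real mu) *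
                     exp (- of_real (fst p) * Complex 1 (snd p) powr (of_real nu))))))"
      unfolding m_def Ku_def by (auto simp: fun_eq_iff)
    also have "\<dots> \<in> borel_measurable (lborel \<Otimes>\<^sub>M lborel)" by measurable
    finally show ?thesis .
  qed
  have mD: "D \<in> borel_measurable (lborel \<Otimes>\<^sub>M lborel)" unfolding D_def by measurable
  have iE: "integrable lborel (\<lambda>y. exp (- (lam * kap) * \<bar>y\<bar> powr nu))"
    using integrable_exp_powr[of "lam * kap" nu] lam kap nu by simp
  have iU: "integrable lborel (\<lambda>u. indicator {lam..} u * exp (- (u - lam)))"
  proof -
    have "((\<lambda>x. exp (- 1 * x)) has_integral exp (- 1 * lam) / 1) {lam..}"
      by (rule has_integral_exp_minus_to_infinity) simp
    hence "((\<lambda>x. exp lam * exp (- 1 * x)) has_integral exp lam * (exp (- 1 * lam) / 1)) {lam..}"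
      by (rule has_integral_mult_right)
    hence "(\<lambda>x. exp (- (x - lam))) integrable_on {lam..}"
      by (simp add: exp_diff exp_minus field_simps) (metis (no_types, lifting) has_integral_integrable)
    hence "set_integrable lborel {lam..} (\<lambda>x. exp (- (x - lam)))"
      by (intro set_int_lborel_nonneg) auto
    thus ?thesis unfolding set_integrable_def by (simp add: mult.commute)
  qed
  have iD: "integrable (lborel \<Otimes>\<^sub>M lborel) D"
  proof (rule lborel_pair.Fubini_integrable[OF mD])
    have "(LBINT y. norm (D (u, y))) = indicator {lam..} u * exp (- (u - lam)) * (exp t * (LBINT y. exp (- (lam * kap) * \<bar>y\<bar> powr nu)))" for u
      unfolding D_def by (simp add: abs_mult)
    thus "integrable lborel (\<lambda>u. LBINT y. norm (D (u, y)))" using iU by simp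
    show "AE u in lborel. integrable lborel (\<lambda>y. D (u, y))" unfolding D_def using iE by simp
  qed
  have nm: "norm (m (u, y)) \<le> D (u, y)" for u y
  proof (cases "u \<ge> lam")
    case True
    define s where "s = Complex 1 y"
    have Res: "0 < Re s" unfolding s_def by simp
    have ns: "1 \<le> cmod s" unfolding s_def using cmod_Complex_ge_Re[of 1 y] .
    have ny: "\<bar>y\<bar> powr nu \<le> cmod s powr nu" unfolding s_def using cmod_Complex_ge_Im[of y 1] nu by (intro powr_mono2) auto
    have a1: "cmod s powr (- mu) \<le> 1" using ns mu powr_mono2'[of "- mu" 1 "cmod s"] by simp
    have "norm (exp (- of_real u * s powr of_real nu)) \<le> exp (- (u * kap) * cmod s powr nu)"
      using norm_exp_powr_le[OF Res nu(1) _, of u] nu lam True unfolding kap_def by simp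
    also have "\<dots> \<le> exp (- (lam * kap) * \<bar>y\<bar> powr nu)"
    proof -
      have "lam * kap * \<bar>y\<bar> powr nu \<le> u * kap * cmod s powr nu"
        using True lam kap ny by (intro mult_mono) auto
      thus ?thesis by simp
    qed
    finally have a2: "norm (exp (- of_real u * s powr of_real nu)) \<le> exp (- (lam * kap) * \<bar>y\<bar> powr nu)" .
    have "norm (m (u, y)) = exp (- (u - lam)) * (exp t * (cmod s powr (- mu) * norm (exp (- of_real u * s powr of_real nu))))"
      unfolding m_def Ku_def s_def[symmetric] using True
      by (simp add: norm_mult norm_powr_real_powr' norm_exp_eq_Re s_def)
    also have "\<dots> \<le> exp (- (u - lam)) * (exp t * (1 * exp (- (lam * kap) * \<bar>y\<bar> powr nu)))"
      using a1 a2 by (intro mult_left_mono mult_mono) auto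
    finally show ?thesis unfolding D_def using True by simp
  next
    case False thus ?thesis unfolding m_def D_def by simp
  qed
  have im: "integrable (lborel \<Otimes>\<^sub>M lborel) m"
  proof (rule Bochner_Integration.integrable_bound[OF iD mm])
    show "AE p in lborel \<Otimes>\<^sub>M lborel. norm (m p) \<le> norm (D p)"
      using nm by (intro AE_I2) (auto simp: D_def)
  qed
  define Phi where "Phi u = indicator {lam..} u *\<^sub>R (exp (- (of_real u - of_real lam)) * K_fun nu mu t u)" for u
  have inner_y: "(LBINT y. m (u, y)) = of_real (2 * pi) * Phi u" for u
  proof (cases "u \<ge> lam")
    case True
    have u0: "0 < u" using True lam by simp
    have gK: "good nu (Ku u)" unfolding Ku_def by (rule good_basic[OF nu u0])
    have "(LBINT y. exp (Complex 1 y * of_real t) * Ku u (Complex 1 y)) = of_real (2 * pi) * K_fun nu mu t u"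
      unfolding K_eq bromwich_lint[OF gK nu(1) zero_less_one] by simp
    thus ?thesis unfolding m_def Phi_def using True by simp
  next
    case False thus ?thesis unfolding m_def Phi_def by simp
  qed
  have inner_u: "(LBINT u. m (u, y)) = exp (Complex 1 y * of_real t) * H (Complex 1 y)" for y
  proof -
    define s where "s = Complex 1 y"
    have Res: "0 < Re s" unfolding s_def by simp
    have Rw: "0 \<le> Re (s powr of_real nu)"
    proof -
      have "0 \<le> cos (pi * nu / 2) * cmod s powr nu" using kap unfolding kap_def by simp
      thus ?thesis using Re_powr_ge[OF Res nu(1)] nu by linarith
    qed
    have "m (u, y) = (exp (s * of_real t) * s powr (- of_real mu)) *
            (indicator {lam..} u *\<^sub>R (exp (- (of_real u - of_real lam)) * exp (- of_real u * s powr of_real nu)))" for u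
      unfolding m_def Ku_def s_def by (simp add: mult_ac)
    hence "(LBINT u. m (u, y)) = (LBINT u. (exp (s * of_real t) * s powr (- of_real mu)) *
            (indicator {lam..} u *\<^sub>R (exp (- (of_real u - of_real lam)) * exp (- of_real u * s powr of_real nu))))"
      by (simp only:)
    also have "\<dots> = (exp (s * of_real t) * s powr (- of_real mu)) *
            (LBINT u. indicator {lam..} u *\<^sub>R (exp (- (of_real u - of_real lam)) * exp (- of_real u * s powr of_real nu)))"
      by (rule integral_mult_right_zero)
    also have "\<dots> = (exp (s * of_real t) * s powr (- of_real mu)) * (exp (- of_real lam * s powr of_real nu) / (1 + s powr of_real nu))"
      unfolding inner_exp(2)[OF Rw] ..
    finally show ?thesis unfolding H_def s_def by (simp add: mult_ac)
  qed
  have "(LBINT u. of_real (2 * pi) * Phi u) = (LBINT y. exp (Complex 1 y * of_real t) * H (Complex 1 y))"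
    using lborel_pair.Fubini_integral[of "\<lambda>u y. m (u, y)"] im unfolding inner_y inner_u
    by (simp add: case_prod_beta' m_def)
  also have "\<dots> = of_real (2 * pi) * bromwich 1 H t"
    unfolding bromwich_lint[OF gH nu(1) zero_less_one] by simp
  finally have I2: "(LBINT u. Phi u) = bromwich 1 H t" by simp
  have iPhi: "integrable lborel Phi"
  proof -
    have "integrable lborel (\<lambda>u. LBINT y. m (u, y))" using lborel_pair.integrable_fst'[OF im] .
    hence "integrable lborel (\<lambda>u. of_real (2 * pi) * Phi u)" unfolding inner_y .
    hence "integrable lborel (\<lambda>u. inverse (of_real (2 * pi)) * (of_real (2 * pi) * Phi u))" by (rule integrable_mult_right)
    moreover have "inverse (of_real (2 * pi)) * (of_real (2 * pi) * Phi u) = Phi u" for u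
      using pi_gt_zero by (simp add: field_simps)
    ultimately show ?thesis by (simp only:)
  qed
  have si: "set_integrable lborel {lam..} (\<lambda>u. exp (- (of_real u - of_real lam)) * K_fun nu mu t u)"
    using iPhi unfolding set_integrable_def Phi_def .
  have "integral {lam..} (\<lambda>u. exp (- (of_real u - of_real lam)) * K_fun nu mu t u) = bromwich 1 H t"
    using set_borel_integral_eq_integral(2)[OF si] I2 unfolding set_lebesgue_integral_def Phi_def by simp
  with integrable_integral[OF set_borel_integral_eq_integral(1)[OF si]]
  show ?thesis unfolding H_def by simp
qed

lemma Gs_eq_H:
  fixes s :: complex
  assumes s: "0 < Re s" and nu: "0 < nu" "nu \<le> 1"
  shows "A * (s powr (- of_real (nu + mu - 1)) * E) / (s * (1 + s powr (- of_real nu))) =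
         A * (s powr (- of_real mu) * E / (1 + s powr of_real nu))"
proof -
  define P where "P = s powr of_real nu"
  have sn: "s \<noteq> 0" using s by auto
  have Pn: "P \<noteq> 0" unfolding P_def using sn by simp
  have P1: "1 + P \<noteq> 0" using one_plus_powr_norm[OF s nu] unfolding P_def by auto
  have im: "s powr (- of_real nu) = inverse P" unfolding P_def by (simp add: powr_minus)
  have r: "s powr (- of_real (nu + mu - 1)) = s powr (- of_real mu) * s * inverse P"
  proof -
    have "- of_real (nu + mu - 1) = (- of_real mu + 1) + (- of_real nu :: complex)" by simp
    hence "s powr (- of_real (nu + mu - 1)) = s powr (- of_real mu) * s powr 1 * s powr (- of_real nu)"
      by (simp only: powr_add)
    thus ?thesis using sn im by simp
  qed
  have sP: "s * (1 + P) \<noteq> 0" using sn P1 by simp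
  have "s + P * s = s * (1 + P)" by (simp add: algebra_simps)
  thus ?thesis unfolding r im P_def[symmetric] using sn Pn P1 sP by (simp add: field_simps)
qed

theorem mainTheorem10:
  fixes \<nu> \<mu> lam t :: real
  assumes "0 < \<nu>" "\<nu> < 1" "0 \<le> \<mu>" "\<mu> < 1" "0 < lam" "0 < t"
  shows "((\<lambda>u. exp (- (u - lam)) * K_fun \<nu> \<mu> t u) has_integral
           of_real (lam powr ((\<nu> + \<mu> - 2) / \<nu>)) *
           integral {0..t} (\<lambda>x. of_real (mittag_leffler \<nu> (- ((t - x) powr \<nu>)))
                                 * f_fun \<nu> (\<nu> + \<mu> - 1) (x / lam powr (1 / \<nu>)))) {lam..}"
proof -
  note nu = assms(1,2)
  have nu1: "\<nu> \<le> 1" using nu by simp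
  define a where "a = lam powr (1 / \<nu>)"
  have a: "0 < a" unfolding a_def using assms by simp
  have anu: "a powr \<nu> = lam" unfolding a_def using assms by (simp add: powr_powr)
  define rho where "rho = \<nu> + \<mu> - 1"
  define c where "c = 1 + 1 / a"
  have c1: "1 < c" unfolding c_def using a by simp
  have c0: "0 < c" using c1 by simp
  have ia: "0 < 1 / a" using a by simp
  have iac: "1 / a \<le> c" unfolding c_def by simp
  define A where "A = a powr (1 - rho)"
  define G where "G s = of_real A * (s powr (- of_real rho) * exp (- of_real (a powr \<nu>) * s powr of_real \<nu>))" for s :: complex
  have gG: "good \<nu> G" unfolding G_def by (intro good_cmult good_basic[OF nu]) (use a in simp)
  define H where "H s = s powr (- of_real \<mu>) * exp (- of_real lam * s powr of_real \<nu>) / (1 + s powr of_real \<nu>)" for s :: complex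
  have gH: "good \<nu> H" unfolding H_def by (rule good_H[OF nu assms(5)])
  have fscale: "f_fun \<nu> rho (x / a) = bromwich c G x" for x
    using f_fun_scale[OF nu a, of rho x] bromwich_shift[OF gG nu(1) ia iac, of x] unfolding G_def A_def by simp
  define Gs where "Gs s = G s / (s * (1 + s powr (- of_real \<nu>)))" for s :: complex
  have GsH: "bromwich c Gs t = of_real A * bromwich c H t"
  proof -
    have "bromwich c Gs t = bromwich c (\<lambda>s. of_real A * H s) t"
    proof (rule bromwich_cong)
      fix y
      have Re: "0 < Re (Complex c y)" using c0 by simp
      show "Gs (Complex c y) = of_real A * H (Complex c y)"
        unfolding Gs_def G_def H_def anu rho_def using Gs_eq_H[OF Re nu(1) nu1] by simp
    qed
    also have "\<dots> = of_real A * bromwich c H t" by (rule bromwich_cmult[OF gH nu(1) c0])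
    finally show ?thesis .
  qed
  define Mf where "Mf x = of_real (mittag_leffler \<nu> (- ((t - x) powr \<nu>))) * bromwich c G x" for x
  have si: "set_integrable lborel {0..t} Mf"
    using conv_ml_part1(1)[OF gG nu(1) c0, of t] assms(6) unfolding set_integrable_def Mf_def by simp
  have "integral {0..t} (\<lambda>x. of_real (mittag_leffler \<nu> (- ((t - x) powr \<nu>))) * f_fun \<nu> (\<nu> + \<mu> - 1) (x / lam powr (1 / \<nu>)))
        = integral {0..t} Mf"
    unfolding Mf_def fscale[symmetric] a_def[symmetric] rho_def ..
  also have "\<dots> = set_lebesgue_integral lborel {0..t} Mf" using set_borel_integral_eq_integral(2)[OF si] ..
  also have "\<dots> = (\<Sum>k. (-1) ^ k * bromwich c (\<lambda>s. s powr (- of_real (real k * \<nu> + 1)) * G s) t)"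
    unfolding set_lebesgue_integral_def Mf_def using conv_ml_part1(2)[OF gG nu(1) c0, of t] assms(6) by simp
  also have "\<dots> = bromwich c Gs t" unfolding Gs_def by (rule conv_ml_part2[OF gG nu(1) c1])
  also have "\<dots> = of_real A * bromwich c H t" by (rule GsH)
  finally have RHS: "integral {0..t} (\<lambda>x. of_real (mittag_leffler \<nu> (- ((t - x) powr \<nu>))) * f_fun \<nu> (\<nu> + \<mu> - 1) (x / lam powr (1 / \<nu>)))
        = of_real A * bromwich c H t" .
  have LHS: "((\<lambda>u. exp (- (of_real u - of_real lam)) * K_fun \<nu> \<mu> t u) has_integral bromwich c H t) {lam..}"
    using LHS_integral[OF nu assms(3,5), of t] bromwich_shift[OF gH nu(1) zero_less_one, of c t] c1
    unfolding H_def by simp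
  have one: "lam powr ((\<nu> + \<mu> - 2) / \<nu>) * A = 1"
  proof -
    have "A = lam powr ((1 - rho) / \<nu>)" unfolding A_def a_def using assms by (simp add: powr_powr)
    hence "lam powr ((\<nu> + \<mu> - 2) / \<nu>) * A = lam powr ((\<nu> + \<mu> - 2) / \<nu> + (1 - rho) / \<nu>)"
      by (simp add: powr_add)
    also have "(\<nu> + \<mu> - 2) / \<nu> + (1 - rho) / \<nu> = 0" unfolding rho_def using nu by (simp add: field_simps)
    finally show ?thesis using assms(5) by simp
  qed
  have e1: "of_real (lam powr ((\<nu> + \<mu> - 2) / \<nu>)) * (of_real A * bromwich c H t) = bromwich c H t"
    using one by (simp add: mult.assoc[symmetric] flip: of_real_mult)
  have eqf: "(\<lambda>u. exp (- (of_real u - of_real lam)) * K_fun \<nu> \<mu> t u) = (\<lambda>u. of_real (exp (- (u - lam))) * K_fun \<nu> \<mu> t u)"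
  proof (rule ext)
    fix u
    have "exp (- (of_real u - of_real lam)) = exp (of_real (- (u - lam)) :: complex)" by simp
    also have "\<dots> = of_real (exp (- (u - lam)))" by (rule exp_of_real)
    finally show "exp (- (of_real u - of_real lam)) * K_fun \<nu> \<mu> t u = of_real (exp (- (u - lam))) * K_fun \<nu> \<mu> t u" by simp
  qed
  show ?thesis unfolding RHS e1 using LHS unfolding eqf .
qed

end
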